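(* Let $T$ be a finite rooted tree with a vertex coloring, and suppose that all orbits of $\mathrm{Aut}(T)$ on the set of leaves of $T$ have the same size. Then there exists a vertex-colored graph $H_T$ containing $T$ (with its coloring) as an induced subgraph such that $V(T)$ is invariant under $\mathrm{Aut}(H_T)$, the action of $\mathrm{Aut}(H_T)$ on $V(T)$ is faithful, the action of $\mathrm{Aut}(H_T)$ on the set of leaves of $T$ is semiregular, and the orbits of $\mathrm{Aut}(H_T)$ on $V(T)$ are exactly the orbits of $\mathrm{Aut}(T)$ on $V(T)$.
   Context: For a vertex-colored graph or tree, automorphisms are required to preserve vertex colors (and, for the rooted tree $T$, the tree structure); $\mathrm{Aut}(\cdot)$ denotes the group of such automorphisms. A leaf orbit of $T$ is an orbit of $\mathrm{Aut}(T)$ on the set of leaves. The action of a group on a set is faithful if only the identity acts trivially, and semiregular if every point stabilizer is trivial (only the identity fixes any given point). *)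

theory Defs
  imports Main
begin

definition simple_graph :: "'a set \<Rightarrow> ('a \<Rightarrow> 'a \<Rightarrow> bool) \<Rightarrow> bool" where
  "simple_graph V E \<longleftrightarrow>
     (\<forall>x y. E x y \<longrightarrow> x \<in> V \<and> y \<in> V) \<and>
     (\<forall>x y. E x y \<longrightarrow> E y x) \<and> (\<forall>x. \<not> E x x)"

definition connected_graph :: "'a set \<Rightarrow> ('a \<Rightarrow> 'a \<Rightarrow> bool) \<Rightarrow> bool" where
  "connected_graph V E \<longleftrightarrow> (\<forall>x\<in>V. \<forall>y\<in>V. E\<^sup>*\<^sup>* x y)"

definition is_cycle :: "('a \<Rightarrow> 'a \<Rightarrow> bool) \<Rightarrow> 'a list \<Rightarrow> bool" where
  "is_cycle E vs \<longleftrightarrow> length vs \<ge> 3 \<and> distinct vs \<and>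
     (\<forall>i. Suc i < length vs \<longrightarrow> E (vs ! i) (vs ! Suc i)) \<and>
     E (last vs) (hd vs)"

definition acyclic_graph :: "('a \<Rightarrow> 'a \<Rightarrow> bool) \<Rightarrow> bool" where
  "acyclic_graph E \<longleftrightarrow> (\<forall>vs. \<not> is_cycle E vs)"

definition finite_rooted_tree :: "'a set \<Rightarrow> ('a \<Rightarrow> 'a \<Rightarrow> bool) \<Rightarrow> 'a \<Rightarrow> bool" where
  "finite_rooted_tree V E r \<longleftrightarrow> finite V \<and> r \<in> V \<and> simple_graph V E \<and>
     connected_graph V E \<and> acyclic_graph E"

text \<open>Leaves of a rooted tree: vertices without children, i.e. non-root vertices of
degree 1, and the root if it has no neighbours (one-vertex tree).\<close>
definition tree_leaves :: "'a set \<Rightarrow> ('a \<Rightarrow> 'a \<Rightarrow> bool) \<Rightarrow> 'a \<Rightarrow> 'a set" where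
  "tree_leaves V E r = {v \<in> V. if v = r then {w. E v w} = {} else card {w. E v w} = 1}"

definition graph_aut :: "'a set \<Rightarrow> ('a \<Rightarrow> 'a \<Rightarrow> bool) \<Rightarrow> ('a \<Rightarrow> 'c) \<Rightarrow> ('a \<Rightarrow> 'a) set" where
  "graph_aut V E c = {\<sigma>. bij_betw \<sigma> V V \<and>
     (\<forall>x\<in>V. \<forall>y\<in>V. E (\<sigma> x) (\<sigma> y) \<longleftrightarrow> E x y) \<and> (\<forall>x\<in>V. c (\<sigma> x) = c x)}"

definition rtree_aut :: "'a set \<Rightarrow> ('a \<Rightarrow> 'a \<Rightarrow> bool) \<Rightarrow> ('a \<Rightarrow> 'c) \<Rightarrow> 'a \<Rightarrow> ('a \<Rightarrow> 'a) set" where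
  "rtree_aut V E c r = {\<sigma> \<in> graph_aut V E c. \<sigma> r = r}"

definition orbit_of :: "('a \<Rightarrow> 'a) set \<Rightarrow> 'a \<Rightarrow> 'a set" where
  "orbit_of G x = (\<lambda>\<sigma>. \<sigma> x) ` G"

end

theory Submission
  imports Defs "HOL-Library.FuncSet" "HOL-Library.Nat_Bijection"
begin


definition walk :: "('a \<Rightarrow> 'a \<Rightarrow> bool) \<Rightarrow> (nat \<Rightarrow> 'a) \<Rightarrow> nat \<Rightarrow> bool" where
  "walk E P n \<longleftrightarrow> (\<forall>i<n. E (P i) (P (Suc i)))"

definition dep :: "('a \<Rightarrow> 'a \<Rightarrow> bool) \<Rightarrow> 'a \<Rightarrow> 'a \<Rightarrow> nat" where
  "dep E r x = (LEAST n. \<exists>P. P 0 = r \<and> P n = x \<and> walk E P n)"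

lemma successively_nth:
  "successively R xs \<longleftrightarrow> (\<forall>i. Suc i < length xs \<longrightarrow> R (xs ! i) (xs ! Suc i))"
proof (induction xs rule: induct_list012)
  case (3 x y xs)
  show ?case
  proof
    assume a: "successively R (x # y # xs)"
    show "\<forall>i. Suc i < length (x # y # xs) \<longrightarrow> R ((x # y # xs) ! i) ((x # y # xs) ! Suc i)"
    proof (intro allI impI)
      fix i assume "Suc i < length (x # y # xs)"
      then show "R ((x # y # xs) ! i) ((x # y # xs) ! Suc i)"
        using a 3 by (cases i) auto
    qed
  next
    assume a: "\<forall>i. Suc i < length (x # y # xs) \<longrightarrow> R ((x # y # xs) ! i) ((x # y # xs) ! Suc i)"
    have "R x y" using a[rule_format, of 0] by simp
    moreover have "\<forall>i. Suc i < length (y # xs) \<longrightarrow> R ((y # xs) ! i) ((y # xs) ! Suc i)"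
      using a[rule_format, of "Suc _"] by auto
    ultimately show "successively R (x # y # xs)" using 3 by simp
  qed
qed auto

locale rt =
  fixes V :: "'a set" and E :: "'a \<Rightarrow> 'a \<Rightarrow> bool" and r :: 'a
  assumes tree: "finite_rooted_tree V E r"
begin

lemma finV: "finite V" and rV: "r \<in> V" and sg: "simple_graph V E"
  and conn: "connected_graph V E" and acyc: "acyclic_graph E"
  using tree unfolding finite_rooted_tree_def by auto

lemma Esym: "E x y \<Longrightarrow> E y x" and EV: "E x y \<Longrightarrow> x \<in> V" "E x y \<Longrightarrow> y \<in> V"
  and Eirr: "\<not> E x x"
  using sg unfolding simple_graph_def by blast+

abbreviation d where "d \<equiv> dep E r"

lemma reach: assumes "x \<in> V" shows "\<exists>n P. P 0 = r \<and> P n = x \<and> walk E P n"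
proof -
  have "E\<^sup>*\<^sup>* r x" using conn assms rV unfolding connected_graph_def by blast
  then show ?thesis
  proof (induction rule: rtranclp_induct)
    case base
    show ?case by (rule exI[of _ 0], rule exI[of _ "\<lambda>_. r"]) (simp add: walk_def)
  next
    case (step y z)
    then obtain n P where P: "P 0 = r" "P n = y" "walk E P n" by blast
    define Q where "Q = P(Suc n := z)"
    have "Q 0 = r" "Q (Suc n) = z" using P by (auto simp: Q_def)
    moreover have "walk E Q (Suc n)" using P step(2) unfolding walk_def Q_def
      by (auto simp: less_Suc_eq)
    ultimately show ?case by blast
  qed
qed

lemma dep_walk: assumes "x \<in> V" shows "\<exists>P. P 0 = r \<and> P (d x) = x \<and> walk E P (d x)"
proof -
  from reach[OF assms] obtain n P where "P 0 = r \<and> P n = x \<and> walk E P n" by blast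
  then show ?thesis unfolding dep_def by (rule LeastI_ex[OF exI[of _ n], OF exI[of _ P]])
qed

lemma dep_le: "P 0 = r \<Longrightarrow> P n = x \<Longrightarrow> walk E P n \<Longrightarrow> d x \<le> n"
  unfolding dep_def by (rule Least_le) blast

lemma dep_r: "d r = 0"
  using dep_le[of "\<lambda>_. r" 0 r] by (simp add: walk_def)

lemma succ_upt: "(\<And>i. m \<le> i \<Longrightarrow> Suc i < n \<Longrightarrow> R i (Suc i)) \<Longrightarrow> successively R [m..<n]"
  unfolding successively_nth by auto

lemma no_meet:
  assumes P0: "P 0 = r" and Pw: "walk E P a" and Pd: "\<forall>i\<le>a. d (P i) = i"
    and Q0: "Q 0 = r" and Qw: "walk E Q a" and Qd: "\<forall>i\<le>a. d (Q i) = i"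
    and ne: "P a \<noteq> Q a"
    and ys: "distinct ys" "\<forall>y\<in>set ys. d y > a" "successively E (P a # ys @ [Q a])"
  shows False
proof -
  define J where "J = {j. j \<le> a \<and> P j = Q j}"
  have finJ: "finite J" unfolding J_def by simp
  have "0 \<in> J" unfolding J_def using P0 Q0 by simp
  define j where "j = Max J"
  have jJ: "j \<in> J" unfolding j_def using finJ \<open>0 \<in> J\<close> Max_in by blast
  have jmax: "\<And>i. i \<le> a \<Longrightarrow> P i = Q i \<Longrightarrow> i \<le> j" unfolding j_def
    using finJ by (intro Max_ge) (auto simp: J_def)
  have ja: "j < a" using jJ ne unfolding J_def by (cases "j = a") auto
  have Pj: "P j = Q j" using jJ unfolding J_def by simp
  define vs where "vs = map P [j..<a] @ (P a # ys @ [Q a]) @ rev (map Q [Suc j..<a])"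
  have s1: "successively E (map P [j..<a])"
    unfolding successively_map by (rule succ_upt) (use Pw in \<open>auto simp: walk_def\<close>)
  have s3: "successively E (rev (map Q [Suc j..<a]))"
    unfolding successively_rev successively_map by (rule succ_upt) (use Qw Esym in \<open>auto simp: walk_def\<close>)
  have lastP: "last (map P [j..<a]) = P (a - 1)" using ja
    by (simp add: last_map) 
  have e1: "E (P (a - 1)) (P a)" using Pw ja unfolding walk_def
    by (metis Suc_pred' bot_nat_0.not_eq_extremum diff_less less_nat_zero_code zero_less_one)
  have e3: "Suc j < a \<Longrightarrow> E (Q a) (hd (rev (map Q [Suc j..<a])))"
  proof -
    assume "Suc j < a"
    then have "hd (rev (map Q [Suc j..<a])) = Q (a - 1)" by (simp add: hd_rev last_map)
    moreover have "E (Q (a - 1)) (Q a)" using Qw ja unfolding walk_def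
      by (metis Suc_pred' bot_nat_0.not_eq_extremum diff_less less_nat_zero_code zero_less_one)
    ultimately show ?thesis using Esym by simp
  qed
  have succ: "successively E vs"
    unfolding vs_def successively_append_iff
    using s1 s3 e1 e3 ys(3) lastP ja by (auto simp del: upt_Suc) (meson not_less)
  have hdvs: "hd vs = P j" unfolding vs_def using ja by (simp add: upt_conv_Cons)
  have lastvs: "last vs = Q (Suc j)"
  proof (cases "Suc j < a")
    case True then show ?thesis unfolding vs_def by (simp add: last_rev upt_conv_Cons)
  next
    case False then have "Suc j = a" using ja by simp
    then show ?thesis unfolding vs_def by simp
  qed
  have elast: "E (last vs) (hd vs)" unfolding lastvs hdvs Pj using Qw ja Esym unfolding walk_def by blast
  have len: "length vs \<ge> 3" unfolding vs_def using ja by simp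
  have dP: "distinct (map P [j..<a])"
    using Pd by (auto simp: distinct_map inj_on_def) (metis less_imp_le_nat)
  have dQ: "distinct (map Q [Suc j..<a])"
    using Qd by (auto simp: distinct_map inj_on_def) (metis less_imp_le_nat)
  have dist: "distinct vs"
  proof -
    have A: "\<forall>x\<in>set (map P [j..<a]). d x < a" using Pd by auto
    have C: "\<forall>x\<in>set (map Q [Suc j..<a]). d x < a" using Qd by auto
    have AC: "set (map P [j..<a]) \<inter> set (map Q [Suc j..<a]) = {}"
    proof (rule ccontr)
      assume "\<not> ?thesis"
      then obtain i i' where ii: "j \<le> i" "i < a" "Suc j \<le> i'" "i' < a" "P i = Q i'" by auto
      then have "i = i'" using Pd Qd by (metis less_imp_le_nat)
      then show False using jmax[of i] ii by auto
    qed
    have "d (P a) = a" "d (Q a) = a" using Pd Qd by auto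
    then show ?thesis unfolding vs_def using dP dQ ys(1) ys(2) A C AC ne
      by (auto simp del: upt_Suc) (meson atLeastLessThan_iff less_asym)+
  qed
  have "is_cycle E vs" unfolding is_cycle_def using len dist succ elast successively_nth by blast
  then show False using acyc unfolding acyclic_graph_def by blast
qed

lemma walk_prefix: "walk E P n \<Longrightarrow> i \<le> n \<Longrightarrow> walk E P i"
  unfolding walk_def by auto

lemma shortest_dep:
  assumes P: "P 0 = r" "P n = x" "walk E P n" and n: "n = d x" and i: "i \<le> n"
  shows "d (P i) = i"
proof -
  have le: "d (P i) \<le> i" using dep_le[OF P(1) refl walk_prefix[OF P(3) i]] .
  show ?thesis
  proof (rule ccontr)
    assume "d (P i) \<noteq> i"
    then have lt: "d (P i) < i" using le by simp
    have "P i \<in> V"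
    proof (cases "i = 0")
      case True then show ?thesis using P rV by simp
    next
      case False
      then have "E (P (i - 1)) (P i)" using P(3) i unfolding walk_def
        by (metis Suc_pred' bot_nat_0.not_eq_extremum diff_less less_le_trans zero_less_one)
      then show ?thesis by (rule EV)
    qed
    from dep_walk[OF this] obtain R where R: "R 0 = r" "R (d (P i)) = P i" "walk E R (d (P i))" by blast
    define k where "k = d (P i)"
    define Q where "Q = (\<lambda>j. if j \<le> k then R j else P (j - k + i))"
    have "Q 0 = r" using R by (simp add: Q_def)
    moreover have "Q (k + (n - i)) = x"
    proof (cases "i = n")
      case True then show ?thesis using P R(2) unfolding Q_def k_def by auto
    next
      case False then show ?thesis using P i unfolding Q_def by auto
    qed
    moreover have "walk E Q (k + (n - i))"
      unfolding walk_def
    proof (intro allI impI)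
      fix j assume j: "j < k + (n - i)"
      show "E (Q j) (Q (Suc j))"
      proof (cases "Suc j \<le> k")
        case True then show ?thesis using R(3) unfolding Q_def walk_def k_def by auto
      next
        case False
        then have "j \<ge> k" by simp
        show ?thesis
        proof (cases "j = k")
          case True
          then show ?thesis using P(3) R(2) j i unfolding Q_def walk_def k_def by auto
        next
          case False
          then have "j - k + i < n" "Suc j - k + i = Suc (j - k + i)" using j \<open>j \<ge> k\<close> i by auto
          then show ?thesis using P(3) \<open>j \<ge> k\<close> False unfolding Q_def walk_def by auto
        qed
      qed
    qed
    ultimately have "d x \<le> k + (n - i)" by (rule dep_le)
    then show False using lt i n k_def by simp
  qed
qed

lemma short_walk: assumes "x \<in> V"
  obtains P where "P 0 = r" "P (d x) = x" "walk E P (d x)" "\<forall>i\<le>d x. d (P i) = i"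
  using dep_walk[OF assms] shortest_dep by metis

lemma dep_edge_le: assumes "E x y" shows "d y \<le> Suc (d x)"
proof -
  obtain P where P: "P 0 = r" "P (d x) = x" "walk E P (d x)" using dep_walk EV(1)[OF assms] by blast
  define Q where "Q = P(Suc (d x) := y)"
  have "walk E Q (Suc (d x))" using P assms unfolding walk_def Q_def by (auto simp: less_Suc_eq)
  moreover have "Q 0 = r" "Q (Suc (d x)) = y" using P by (auto simp: Q_def)
  ultimately show ?thesis using dep_le by blast
qed

lemma dep_edge_ne: assumes "E x y" shows "d x \<noteq> d y"
proof
  assume eq: "d x = d y"
  obtain P where P: "P 0 = r" "P (d x) = x" "walk E P (d x)" "\<forall>i\<le>d x. d (P i) = i"
    using short_walk EV(1)[OF assms] by blast
  obtain Q where Q: "Q 0 = r" "Q (d y) = y" "walk E Q (d y)" "\<forall>i\<le>d y. d (Q i) = i"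
    using short_walk EV(2)[OF assms] by blast
  have "x \<noteq> y" using assms Eirr by blast
  show False
    by (rule no_meet[of P "d x" Q "[]"]) (use P Q eq assms \<open>x \<noteq> y\<close> in auto)
qed

lemma dep_pred: assumes "x \<in> V" "x \<noteq> r" shows "\<exists>y. E x y \<and> Suc (d y) = d x"
proof -
  obtain P where P: "P 0 = r" "P (d x) = x" "walk E P (d x)" "\<forall>i\<le>d x. d (P i) = i"
    using short_walk assms(1) by blast
  have "d x \<noteq> 0"
  proof
    assume "d x = 0" then have "P 0 = x" using P(2) by simp
    then show False using P(1) assms(2) by simp
  qed
  then have "E (P (d x - 1)) x" using P unfolding walk_def
    by (metis Suc_pred' bot_nat_0.not_eq_extremum diff_less zero_less_one)
  moreover have "d (P (d x - 1)) = d x - 1" using P by simp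
  ultimately show ?thesis using Esym \<open>d x \<noteq> 0\<close> by (metis Suc_pred' bot_nat_0.not_eq_extremum)
qed

lemma dep_pred_uniq:
  assumes "E x y1" "E x y2" "Suc (d y1) = d x" "Suc (d y2) = d x"
  shows "y1 = y2"
proof (rule ccontr)
  assume ne: "y1 \<noteq> y2"
  obtain P where P: "P 0 = r" "P (d y1) = y1" "walk E P (d y1)" "\<forall>i\<le>d y1. d (P i) = i"
    using short_walk EV(2)[OF assms(1)] by blast
  obtain Q where Q: "Q 0 = r" "Q (d y2) = y2" "walk E Q (d y2)" "\<forall>i\<le>d y2. d (Q i) = i"
    using short_walk EV(2)[OF assms(2)] by blast
  have eq: "d y2 = d y1" using assms by simp
  show False
    by (rule no_meet[of P "d y1" Q "[x]"]) (use P Q eq assms ne Esym in auto)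
qed

definition par :: "'a \<Rightarrow> 'a" where "par x = (SOME y. E x y \<and> Suc (d y) = d x)"

lemma par: assumes "x \<in> V" "x \<noteq> r" shows "E x (par x)" "Suc (d (par x)) = d x" "par x \<in> V"
proof -
  have "E x (par x) \<and> Suc (d (par x)) = d x"
    unfolding par_def using dep_pred[OF assms] by (rule someI_ex)
  then show "E x (par x)" "Suc (d (par x)) = d x" "par x \<in> V" using EV by auto
qed

lemma dep0: "x \<in> V \<Longrightarrow> d x = 0 \<Longrightarrow> x = r"
  using par(2) by fastforce

lemma E_iff: "E x y \<longleftrightarrow> x \<in> V \<and> y \<in> V \<and> ((x \<noteq> r \<and> par x = y) \<or> (y \<noteq> r \<and> par y = x))"
proof
  assume e: "E x y"
  have "d y \<le> Suc (d x)" "d x \<le> Suc (d y)" "d x \<noteq> d y" using dep_edge_le e Esym dep_edge_ne by blast+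
  then consider "Suc (d y) = d x" | "Suc (d x) = d y" by linarith
  then show "x \<in> V \<and> y \<in> V \<and> ((x \<noteq> r \<and> par x = y) \<or> (y \<noteq> r \<and> par y = x))"
  proof cases
    case 1
    then have "x \<noteq> r" using dep_r by auto
    then have "par x = y" using dep_pred_uniq[OF par(1) e par(2) 1] EV e by auto
    then show ?thesis using EV e \<open>x \<noteq> r\<close> by auto
  next
    case 2
    then have "y \<noteq> r" using dep_r by auto
    then have "par y = x" using dep_pred_uniq[OF par(1) Esym[OF e] par(2) 2] EV e by auto
    then show ?thesis using EV e \<open>y \<noteq> r\<close> by auto
  qed
next
  assume "x \<in> V \<and> y \<in> V \<and> ((x \<noteq> r \<and> par x = y) \<or> (y \<noteq> r \<and> par y = x))"
  then show "E x y" using par(1) Esym by blast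
qed

end


lemma perm_period:
  assumes fin: "finite V" and b: "bij_betw \<sigma> V V"
  shows "\<exists>N>0. \<forall>x\<in>V. (\<sigma> ^^ N) x = x"
proof -
  define F where "F = (\<lambda>k. restrict (\<sigma> ^^ k) V)"
  have "\<forall>k. \<forall>x\<in>V. (\<sigma> ^^ k) x \<in> V" using bij_betw_funpow[OF b] bij_betwE by blast
  then have "range F \<subseteq> V \<rightarrow>\<^sub>E V" by (auto simp: F_def)
  moreover have "finite (V \<rightarrow>\<^sub>E V)" using fin by (simp add: finite_PiE)
  ultimately have "finite (range F)" by (rule finite_subset)
  then have "\<not> inj F" using finite_imageD infinite_UNIV_nat by blast
  then obtain a b where ab: "a \<noteq> b" "F a = F b" unfolding inj_def by blast
  have key: "\<exists>N>0. \<forall>x\<in>V. (\<sigma> ^^ N) x = x" if "a < b" "F a = F b" for a b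
  proof (intro exI[of _ "b - a"] conjI ballI)
    show "0 < b - a" using that by simp
    fix x assume x: "x \<in> V"
    have "(\<sigma> ^^ b) x = (\<sigma> ^^ a) x" using that(2) x unfolding F_def restrict_def by (metis)
    moreover have "(\<sigma> ^^ b) x = (\<sigma> ^^ a) ((\<sigma> ^^ (b - a)) x)"
      using that(1) by (metis funpow_add le_add_diff_inverse less_imp_le_nat o_apply)
    moreover have "(\<sigma> ^^ (b - a)) x \<in> V" using bij_betw_funpow[OF b] x unfolding bij_betw_def by auto
    moreover have "inj_on (\<sigma> ^^ a) V" using bij_betw_funpow[OF b] unfolding bij_betw_def by auto
    ultimately show "(\<sigma> ^^ (b - a)) x = x" using x by (metis inj_on_def)
  qed
  show ?thesis
  proof (cases "a < b")
    case True then show ?thesis using key ab by blast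
  next
    case False then have "b < a" using ab by simp
    then show ?thesis using key ab by metis
  qed
qed

locale rtc = rt V E r for V :: "'a set" and E and r +
  fixes c :: "'a \<Rightarrow> 'c"
begin

definition aut :: "('a \<Rightarrow> 'a) \<Rightarrow> bool" where
  "aut \<sigma> \<longleftrightarrow> \<sigma> \<in> rtree_aut V E c r"

lemma autD: assumes "aut \<sigma>"
  shows "bij_betw \<sigma> V V" "\<sigma> r = r" "\<And>x. x \<in> V \<Longrightarrow> c (\<sigma> x) = c x"
    "\<And>x y. x \<in> V \<Longrightarrow> y \<in> V \<Longrightarrow> E (\<sigma> x) (\<sigma> y) \<longleftrightarrow> E x y"
  using assms unfolding aut_def rtree_aut_def graph_aut_def by auto

lemma aut_V: "aut \<sigma> \<Longrightarrow> x \<in> V \<Longrightarrow> \<sigma> x \<in> V"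
  using autD(1) bij_betwE by blast

lemma aut_inj: "aut \<sigma> \<Longrightarrow> x \<in> V \<Longrightarrow> y \<in> V \<Longrightarrow> \<sigma> x = \<sigma> y \<longleftrightarrow> x = y"
  using autD(1) unfolding bij_betw_def inj_on_def by blast

lemma aut_inv: assumes "aut \<sigma>" shows "aut (inv_into V \<sigma>)"
proof -
  let ?i = "inv_into V \<sigma>"
  have b: "bij_betw ?i V V" using autD(1)[OF assms] by (rule bij_betw_inv_into)
  have fi: "\<And>x. x \<in> V \<Longrightarrow> \<sigma> (?i x) = x" using autD(1)[OF assms]
    by (meson bij_betw_inv_into_right)
  have iV: "\<And>x. x \<in> V \<Longrightarrow> ?i x \<in> V" using b bij_betwE by blast
  have "?i r = r" using autD(1,2)[OF assms] rV by (metis bij_betw_inv_into_left)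
  moreover have "\<forall>x\<in>V. c (?i x) = c x"
  proof
    fix x assume x: "x \<in> V"
    have "c (\<sigma> (?i x)) = c (?i x)" using autD(3)[OF assms iV[OF x]] .
    then show "c (?i x) = c x" using fi[OF x] by simp
  qed
  moreover have "\<forall>x\<in>V. \<forall>y\<in>V. E (?i x) (?i y) \<longleftrightarrow> E x y"
  proof (intro ballI)
    fix x y assume x: "x \<in> V" and y: "y \<in> V"
    have "E (\<sigma> (?i x)) (\<sigma> (?i y)) \<longleftrightarrow> E (?i x) (?i y)" using autD(4)[OF assms iV[OF x] iV[OF y]] .
    then show "E (?i x) (?i y) \<longleftrightarrow> E x y" using fi[OF x] fi[OF y] by simp
  qed
  ultimately show ?thesis using b unfolding aut_def rtree_aut_def graph_aut_def by auto
qed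

lemma aut_dep_le: assumes "aut \<sigma>" shows "x \<in> V \<Longrightarrow> d (\<sigma> x) \<le> d x"
proof (induction "d x" arbitrary: x)
  case 0
  then have "x = r" using dep0 by simp
  then show ?case using autD(2)[OF assms] dep_r by simp
next
  case (Suc n)
  then have xr: "x \<noteq> r" using dep_r by auto
  have "E x (par x)" "d (par x) = n" "par x \<in> V" using par[OF Suc(3) xr] Suc(2) by auto
  then have "E (\<sigma> x) (\<sigma> (par x))" "d (\<sigma> (par x)) \<le> n"
    using autD(4)[OF assms] Suc by auto
  then have "E (\<sigma> (par x)) (\<sigma> x)" "d (\<sigma> (par x)) \<le> n" using Esym by auto
  then show ?case using dep_edge_le[of "\<sigma> (par x)" "\<sigma> x"] Suc(2) by linarith
qed

lemma aut_dep: assumes "aut \<sigma>" "x \<in> V" shows "d (\<sigma> x) = d x"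
proof -
  have "d (inv_into V \<sigma> (\<sigma> x)) \<le> d (\<sigma> x)"
    using aut_dep_le[OF aut_inv[OF assms(1)]] aut_V assms by blast
  moreover have "inv_into V \<sigma> (\<sigma> x) = x" using autD(1)[OF assms(1)] assms(2)
    by (meson bij_betw_inv_into_left)
  ultimately show ?thesis using aut_dep_le[OF assms(1) assms(2)] by simp
qed

lemma aut_par: assumes "aut \<sigma>" "x \<in> V" "x \<noteq> r" shows "par (\<sigma> x) = \<sigma> (par x)"
proof -
  have "E (\<sigma> x) (\<sigma> (par x))" using par[OF assms(2,3)] autD(4)[OF assms(1)] assms by auto
  then have "(\<sigma> x \<noteq> r \<and> par (\<sigma> x) = \<sigma> (par x)) \<or> (\<sigma> (par x) \<noteq> r \<and> par (\<sigma> (par x)) = \<sigma> x)"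
    using E_iff by blast
  moreover have "\<not> (\<sigma> (par x) \<noteq> r \<and> par (\<sigma> (par x)) = \<sigma> x)"
  proof
    assume a: "\<sigma> (par x) \<noteq> r \<and> par (\<sigma> (par x)) = \<sigma> x"
    have pV: "par x \<in> V" "\<sigma> (par x) \<in> V" using par[OF assms(2,3)] aut_V[OF assms(1)] by auto
    have "Suc (d (\<sigma> x)) = d (\<sigma> (par x))" using par(2)[OF pV(2)] a by simp
    then show False using aut_dep[OF assms(1)] assms(2) pV par(2)[OF assms(2,3)] by simp
  qed
  ultimately show ?thesis by blast
qed

lemma aut_intro:
  assumes b: "bij_betw \<sigma> V V" and rr: "\<sigma> r = r" and col: "\<forall>x\<in>V. c (\<sigma> x) = c x"
    and pc: "\<forall>x\<in>V. x \<noteq> r \<longrightarrow> par (\<sigma> x) = \<sigma> (par x)"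
  shows "aut \<sigma>"
proof -
  have sV: "\<And>x. x \<in> V \<Longrightarrow> \<sigma> x \<in> V" using b bij_betwE by blast
  have inj: "\<And>x y. x \<in> V \<Longrightarrow> y \<in> V \<Longrightarrow> \<sigma> x = \<sigma> y \<longleftrightarrow> x = y"
    using b unfolding bij_betw_def inj_on_def by blast
  have nr: "\<And>x. x \<in> V \<Longrightarrow> \<sigma> x = r \<longleftrightarrow> x = r" using inj rr rV by metis
  have "\<forall>x\<in>V. \<forall>y\<in>V. E (\<sigma> x) (\<sigma> y) \<longleftrightarrow> E x y"
  proof (intro ballI)
    fix x y assume xy: "x \<in> V" "y \<in> V"
    have 1: "x \<noteq> r \<Longrightarrow> par (\<sigma> x) = \<sigma> y \<longleftrightarrow> par x = y"
      using pc inj par(3) xy by metis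
    have 2: "y \<noteq> r \<Longrightarrow> par (\<sigma> y) = \<sigma> x \<longleftrightarrow> par y = x"
      using pc inj par(3) xy by metis
    show "E (\<sigma> x) (\<sigma> y) \<longleftrightarrow> E x y"
      unfolding E_iff[of "\<sigma> x"] E_iff[of x] using xy sV nr 1 2 by auto
  qed
  then show ?thesis using b rr col unfolding aut_def rtree_aut_def graph_aut_def by auto
qed

lemma aut_par': "aut \<sigma> \<Longrightarrow> \<forall>x\<in>V. x \<noteq> r \<longrightarrow> par (\<sigma> x) = \<sigma> (par x)"
  using aut_par by blast

lemma aut_comp: assumes "aut \<sigma>" "aut \<tau>" shows "aut (\<sigma> \<circ> \<tau>)"
proof (rule aut_intro)
  show "bij_betw (\<sigma> \<circ> \<tau>) V V" using autD(1) assms bij_betw_trans by blast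
  show "(\<sigma> \<circ> \<tau>) r = r" using autD(2)[OF assms(1)] autD(2)[OF assms(2)] by simp
  show "\<forall>x\<in>V. c ((\<sigma> \<circ> \<tau>) x) = c x" using autD(3) assms aut_V by simp
  show "\<forall>x\<in>V. x \<noteq> r \<longrightarrow> par ((\<sigma> \<circ> \<tau>) x) = (\<sigma> \<circ> \<tau>) (par x)"
  proof (intro ballI impI)
    fix x assume x: "x \<in> V" "x \<noteq> r"
    have tx: "\<tau> x \<in> V" "\<tau> x \<noteq> r" using aut_V[OF assms(2) x(1)] aut_inj[OF assms(2) x(1) rV] autD(2)[OF assms(2)] x by auto
    show "par ((\<sigma> \<circ> \<tau>) x) = (\<sigma> \<circ> \<tau>) (par x)"
      using aut_par[OF assms(1) tx] aut_par[OF assms(2) x] by simp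
  qed
qed

lemma aut_id: "aut id"
  by (rule aut_intro) (simp_all add: bij_betw_id)

lemma aut_pow: assumes "aut \<sigma>" shows "aut (\<sigma> ^^ n)"
proof (induction n)
  case 0 then show ?case using aut_id by (simp add: id_def)
next
  case (Suc n)
  have "\<sigma> ^^ Suc n = \<sigma> \<circ> \<sigma> ^^ n" by simp
  then show ?case using aut_comp[OF assms Suc.IH] by metis
qed

lemma aut_period: assumes "aut \<sigma>" shows "\<exists>N>0. \<forall>x\<in>V. (\<sigma> ^^ N) x = x"
  using perm_period[OF finV autD(1)[OF assms]] .

end


context rtc
begin

definition desc :: "'a \<Rightarrow> 'a \<Rightarrow> bool" where
  "desc v x \<longleftrightarrow> x \<in> V \<and> d v \<le> d x \<and> (par ^^ (d x - d v)) x = v"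

lemma itp: "x \<in> V \<Longrightarrow> k \<le> d x \<Longrightarrow> (par ^^ k) x \<in> V \<and> d ((par ^^ k) x) = d x - k"
proof (induction k)
  case 0 then show ?case by simp
next
  case (Suc k)
  then have IH: "(par ^^ k) x \<in> V" "d ((par ^^ k) x) = d x - k" by auto
  then have "(par ^^ k) x \<noteq> r" using Suc(3) dep_r by auto
  then show ?case using par[OF IH(1)] IH(2) by auto
qed

lemma desc_V: "desc v x \<Longrightarrow> v \<in> V" and desc_V2: "desc v x \<Longrightarrow> x \<in> V"
  unfolding desc_def using itp by (metis diff_le_self) blast

lemma desc_refl: "x \<in> V \<Longrightarrow> desc x x"
  unfolding desc_def by simp

lemma desc_dep: "desc v x \<Longrightarrow> d v \<le> d x"
  unfolding desc_def by simp

lemma desc_eq: "desc v x \<Longrightarrow> d v = d x \<Longrightarrow> v = x"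
  unfolding desc_def by simp

lemma desc_uniq: "desc v x \<Longrightarrow> desc w x \<Longrightarrow> d v = d w \<Longrightarrow> v = w"
  unfolding desc_def by metis

lemma desc_par: assumes "desc v x" "x \<noteq> v" shows "x \<noteq> r" "desc v (par x)"
proof -
  have lt: "d v < d x" using assms desc_eq desc_dep by fastforce
  then show xr: "x \<noteq> r" using dep_r by auto
  have x: "x \<in> V" using assms desc_def by blast
  have p: "par x \<in> V" "Suc (d (par x)) = d x" using par[OF x xr] by auto
  have "(par ^^ (d (par x) - d v)) (par x) = (par ^^ Suc (d (par x) - d v)) x"
    by (simp add: funpow_Suc_right del: funpow.simps)
  also have "Suc (d (par x) - d v) = d x - d v" using p lt by simp
  finally show "desc v (par x)" using assms p lt unfolding desc_def by simp
qed

lemma desc_par_rev: assumes "x \<in> V" "x \<noteq> r" "desc v (par x)" shows "desc v x"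
proof -
  have p: "par x \<in> V" "Suc (d (par x)) = d x" using par[OF assms(1,2)] by auto
  have le: "d v \<le> d (par x)" using assms(3) desc_dep by blast
  have "(par ^^ (d x - d v)) x = (par ^^ Suc (d (par x) - d v)) x" using p le
    by (metis Suc_diff_le)
  also have "\<dots> = (par ^^ (d (par x) - d v)) (par x)"
    by (simp add: funpow_Suc_right del: funpow.simps)
  finally show ?thesis using assms(3) assms(1) p le unfolding desc_def by simp
qed

lemma child_desc: "x \<in> V \<Longrightarrow> x \<noteq> r \<Longrightarrow> desc (par x) x"
  using desc_par_rev desc_refl par(3) by blast

lemma aut_itp: assumes "aut \<sigma>" "x \<in> V"
  shows "k \<le> d x \<Longrightarrow> \<sigma> ((par ^^ k) x) = (par ^^ k) (\<sigma> x)"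
proof (induction k)
  case 0 then show ?case by simp
next
  case (Suc k)
  have y: "(par ^^ k) x \<in> V" "d ((par ^^ k) x) = d x - k" using itp[OF assms(2)] Suc(2) by auto
  then have yr: "(par ^^ k) x \<noteq> r" using Suc(2) dep_r by auto
  have "\<sigma> ((par ^^ Suc k) x) = \<sigma> (par ((par ^^ k) x))" by simp
  also have "\<dots> = par (\<sigma> ((par ^^ k) x))" using aut_par[OF assms(1) y(1) yr] by simp
  also have "\<dots> = par ((par ^^ k) (\<sigma> x))" using Suc by simp
  finally show ?case by simp
qed

lemma desc_aut: assumes "aut \<sigma>" "desc v x" shows "desc (\<sigma> v) (\<sigma> x)"
proof -
  have x: "x \<in> V" and v: "v \<in> V" using assms(2) desc_V desc_V2 by auto
  have "d (\<sigma> x) = d x" "d (\<sigma> v) = d v" using aut_dep[OF assms(1)] x v by auto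
  moreover have "\<sigma> x \<in> V" using aut_V[OF assms(1) x] .
  moreover have "(par ^^ (d x - d v)) (\<sigma> x) = \<sigma> v"
    using aut_itp[OF assms(1) x, of "d x - d v"] assms(2) unfolding desc_def by simp
  ultimately show ?thesis using assms(2) unfolding desc_def by simp
qed

lemma fix_desc: assumes "aut \<tau>" "desc x l" "\<tau> l = l" shows "\<tau> x = x"
  using aut_itp[OF assms(1), of l "d l - d x"] assms(2,3) desc_V2[OF assms(2)] unfolding desc_def by simp

lemma leaf_exists: assumes "v \<in> V" shows "\<exists>l. desc v l \<and> l \<in> tree_leaves V E r"
proof -
  have fin: "finite {x. desc v x}" using finV desc_V2 by (metis mem_Collect_eq rev_finite_subset subsetI)
  have ne: "v \<in> {x. desc v x}" using desc_refl assms by simp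
  obtain l where l: "l \<in> {x. desc v x}" "\<forall>y\<in>{x. desc v x}. d y \<le> d l"
  proof -
    let ?S = "{x. desc v x}"
    have "Max (d ` ?S) \<in> d ` ?S" using fin ne by (intro Max_in) auto
    then obtain l where "l \<in> ?S" "d l = Max (d ` ?S)" by auto
    moreover have "\<forall>y\<in>?S. d y \<le> Max (d ` ?S)" using fin by auto
    ultimately show ?thesis using that by auto
  qed
  have lV: "l \<in> V" using l(1) desc_V2 by simp
  have nochild: "\<not> (z \<in> V \<and> z \<noteq> r \<and> par z = l)" for z
  proof
    assume z: "z \<in> V \<and> z \<noteq> r \<and> par z = l"
    then have "desc v z" using desc_par_rev l(1) by auto
    moreover have "d z = Suc (d l)" using par(2) z by fastforce
    ultimately show False using l(2) by fastforce
  qed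
  have "l \<in> tree_leaves V E r"
  proof (cases "l = r")
    case True
    have "{w. E l w} = {}" using nochild True E_iff by auto
    then show ?thesis unfolding tree_leaves_def using lV True by simp
  next
    case False
    have "{w. E l w} = {par l}" using nochild False E_iff lV par(3) by auto
    then show ?thesis unfolding tree_leaves_def using lV False by simp
  qed
  then show ?thesis using l(1) by auto
qed

end


context rtc
begin

lemma lift:
  assumes v: "v \<in> V" and C: "\<forall>y\<in>C. y \<in> V \<and> y \<noteq> r \<and> par y = v"
    and b: "bij_betw \<beta> C C" and tr: "\<forall>y\<in>C. \<exists>\<tau>. aut \<tau> \<and> \<tau> y = \<beta> y"
  shows "\<exists>\<rho>. aut \<rho> \<and> (\<forall>y\<in>C. \<rho> y = \<beta> y) \<and> (\<forall>x. \<not> (\<exists>y\<in>C. desc y x) \<longrightarrow> \<rho> x = x)"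
proof -
  define T where "T y = (SOME \<tau>. aut \<tau> \<and> \<tau> y = \<beta> y)" for y
  have T: "aut (T y)" "T y y = \<beta> y" if "y \<in> C" for y
    using someI_ex[OF tr[rule_format, OF that]] unfolding T_def by auto
  define k where "k = Suc (d v)"
  have dC: "d y = k" if "y \<in> C" for y using C that par(2) k_def by fastforce
  have bC: "\<beta> y \<in> C" if "y \<in> C" for y using b that bij_betwE by blast
  define an where "an x = (par ^^ (d x - k)) x" for x
  define S where "S = {x. \<exists>y\<in>C. desc y x}"
  have anS: "an x \<in> C" "desc (an x) x" if xS: "x \<in> S" for x
  proof -
    obtain y where y: "y \<in> C" "desc y x" using xS S_def by auto
    then have "an x = y" unfolding an_def using dC[OF y(1)] desc_def by auto
    then show "an x \<in> C" "desc (an x) x" using y by auto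
  qed
  have SV: "x \<in> S \<Longrightarrow> x \<in> V" for x using anS desc_V2 by blast
  have an_eq: "an x = y" if "desc y x" "y \<in> C" for x y
    unfolding an_def using dC[OF that(2)] that(1) desc_def by auto
  define \<rho> where "\<rho> x = (if x \<in> S then T (an x) x else x)" for x
  have rS: "\<rho> x \<in> S" "an (\<rho> x) = \<beta> (an x)" if "x \<in> S" for x
  proof -
    have "desc (T (an x) (an x)) (T (an x) x)" using desc_aut T anS that by blast
    then have "desc (\<beta> (an x)) (\<rho> x)" using T(2) anS that unfolding \<rho>_def by simp
    then show "\<rho> x \<in> S" "an (\<rho> x) = \<beta> (an x)" using bC anS that an_eq unfolding S_def by auto
  qed
  have rV: "\<rho> x \<in> V" if "x \<in> V" for x
    using that rS SV unfolding \<rho>_def by auto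
  have rinj: "inj_on \<rho> V"
  proof (rule inj_onI)
    fix x y assume xy: "x \<in> V" "y \<in> V" "\<rho> x = \<rho> y"
    show "x = y"
    proof (cases "x \<in> S")
      case True
      show ?thesis
      proof (cases "y \<in> S")
        case True
        have "\<beta> (an x) = \<beta> (an y)" using rS \<open>x \<in> S\<close> True xy(3) by metis
        then have "an x = an y" using b anS \<open>x \<in> S\<close> True unfolding bij_betw_def inj_on_def by metis
        then have "T (an x) x = T (an x) y" using xy(3) \<open>x \<in> S\<close> True unfolding \<rho>_def by simp
        then show ?thesis using aut_inj T(1) anS(1) \<open>x \<in> S\<close> xy(1,2) by blast
      next
        case False
        then show ?thesis using rS(1)[OF \<open>x \<in> S\<close>] xy(3) unfolding \<rho>_def by simp
      qed
    next
      case False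
      show ?thesis
      proof (cases "y \<in> S")
        case True
        then show ?thesis using rS(1)[OF True] xy(3) False unfolding \<rho>_def by simp
      next
        case False
        then show ?thesis using xy(3) \<open>x \<notin> S\<close> unfolding \<rho>_def by simp
      qed
    qed
  qed
  have rbij: "bij_betw \<rho> V V"
    unfolding bij_betw_def using rinj endo_inj_surj[OF finV _ rinj] rV by blast
  have rnS: "r \<notin> S"
  proof
    assume "r \<in> S"
    then have "d (an r) \<le> d r" using anS desc_dep by blast
    then show False using dC anS \<open>r \<in> S\<close> dep_r k_def by fastforce
  qed
  have rr: "\<rho> r = r" using rnS unfolding \<rho>_def by simp
  have col: "\<forall>x\<in>V. c (\<rho> x) = c x"
    using autD(3) T(1) anS(1) unfolding \<rho>_def by auto
  have pc: "\<forall>x\<in>V. x \<noteq> r \<longrightarrow> par (\<rho> x) = \<rho> (par x)"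
  proof (intro ballI impI)
    fix x assume x: "x \<in> V" "x \<noteq> r"
    show "par (\<rho> x) = \<rho> (par x)"
    proof (cases "x \<in> S")
      case True
      show ?thesis
      proof (cases "x \<in> C")
        case True
        have "an x = x" using an_eq desc_refl x(1) True by blast
        then have "\<rho> x = \<beta> x" using T(2) True \<open>x \<in> S\<close> unfolding \<rho>_def by simp
        then have "par (\<rho> x) = v" using C bC True by simp
        moreover have "par x = v" using C True by simp
        moreover have "v \<notin> S"
        proof
          assume "v \<in> S"
          then have "d (an v) \<le> d v" using anS desc_dep by blast
          then show False using dC anS \<open>v \<in> S\<close> k_def by fastforce
        qed
        ultimately show ?thesis unfolding \<rho>_def by simp
      next
        case False
        have ne: "x \<noteq> an x" using anS(1) \<open>x \<in> S\<close> False by metis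
        have pd: "desc (an x) (par x)" using desc_par(2)[OF anS(2)[OF \<open>x \<in> S\<close>] ne] .
        then have pS: "par x \<in> S" and ap: "an (par x) = an x"
          using anS(1)[OF \<open>x \<in> S\<close>] an_eq unfolding S_def by auto
        have "\<rho> (par x) = T (an x) (par x)" using pS ap unfolding \<rho>_def by simp
        also have "\<dots> = par (T (an x) x)" using aut_par[OF T(1)[OF anS(1)[OF \<open>x \<in> S\<close>]] x] by simp
        also have "\<dots> = par (\<rho> x)" using \<open>x \<in> S\<close> unfolding \<rho>_def by simp
        finally show ?thesis by simp
      qed
    next
      case False
      have "par x \<notin> S"
      proof
        assume "par x \<in> S"
        then have "x \<in> S" using desc_par_rev[OF x] anS unfolding S_def by blast
        then show False using False by simp
      qed
      then show ?thesis using False unfolding \<rho>_def by simp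
    qed
  qed
  have "aut \<rho>" by (rule aut_intro[OF rbij rr col pc])
  moreover have "\<forall>y\<in>C. \<rho> y = \<beta> y"
  proof
    fix y assume y: "y \<in> C"
    have "y \<in> S" using y desc_refl C unfolding S_def by blast
    moreover have "an y = y" using an_eq desc_refl y C by blast
    ultimately show "\<rho> y = \<beta> y" using T(2)[OF y] unfolding \<rho>_def by simp
  qed
  moreover have "\<forall>x. \<not> (\<exists>y\<in>C. desc y x) \<longrightarrow> \<rho> x = x" unfolding \<rho>_def S_def by simp
  ultimately show ?thesis by blast
qed

end


lemma cyc_perm:
  assumes fin: "finite C" and cC: "c \<in> C"
  shows "\<exists>\<kappa>. bij_betw \<kappa> C C \<and> (\<forall>y\<in>C. \<exists>i. (\<kappa> ^^ i) c = y)"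
proof -
  define n where "n = card C"
  have n0: "0 < n" using fin cC n_def card_gt_0_iff by blast
  obtain h where h: "bij_betw h {0..<n} C" using ex_bij_betw_nat_finite[OF fin] n_def by blast
  define g where "g = inv_into {0..<n} h"
  have gh: "g (h a) = a" if "a < n" for a using h that unfolding g_def
    by (simp add: bij_betw_inv_into_left)
  have hg: "h (g y) = y" "g y < n" if "y \<in> C" for y using h that unfolding g_def
    by (auto simp: bij_betw_inv_into_right bij_betw_def inv_into_into[of y h "{0..<n}"])
  have hC: "h a \<in> C" if "a < n" for a using h that bij_betwE by fastforce
  have hinj: "h a = h b \<Longrightarrow> a < n \<Longrightarrow> b < n \<Longrightarrow> a = b" for a b
    using h unfolding bij_betw_def inj_on_def by auto
  define \<kappa> where "\<kappa> y = h (Suc (g y) mod n)" for y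
  obtain i0 where i0: "i0 < n" "h i0 = c" using hg cC by blast
  have pw: "(\<kappa> ^^ i) c = h ((i0 + i) mod n)" for i
  proof (induction i)
    case 0 then show ?case using i0 by simp
  next
    case (Suc i)
    have "(\<kappa> ^^ Suc i) c = \<kappa> (h ((i0 + i) mod n))" using Suc by simp
    also have "\<dots> = h (Suc ((i0 + i) mod n) mod n)" unfolding \<kappa>_def using gh n0 by simp
    also have "\<dots> = h ((i0 + Suc i) mod n)" by (simp add: mod_Suc_eq)
    finally show ?case .
  qed
  have reach: "\<forall>y\<in>C. \<exists>i. (\<kappa> ^^ i) c = y"
  proof
    fix y assume y: "y \<in> C"
    have "(i0 + (g y + n - i0)) mod n = g y" using i0 hg(2)[OF y] by simp
    then show "\<exists>i. (\<kappa> ^^ i) c = y" using pw hg(1)[OF y] by metis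
  qed
  have kC: "\<kappa> ` C \<subseteq> C" unfolding \<kappa>_def using hC n0 by auto
  have kinj: "inj_on \<kappa> C"
  proof (rule inj_onI)
    fix x y assume xy: "x \<in> C" "y \<in> C" "\<kappa> x = \<kappa> y"
    then have "Suc (g x) mod n = Suc (g y) mod n" unfolding \<kappa>_def using hinj n0 by simp
    then have "g x = g y" using hg(2) xy by (auto simp: mod_Suc split: if_splits)
    then show "x = y" using hg(1) xy by metis
  qed
  have "bij_betw \<kappa> C C" unfolding bij_betw_def using kinj endo_inj_surj[OF fin kC kinj] by simp
  then show ?thesis using reach by blast
qed

context rtc
begin

definition good :: "('a \<Rightarrow> 'a) \<Rightarrow> 'a set \<Rightarrow> bool" where
  "good \<sigma> D \<longleftrightarrow> aut \<sigma> \<and> D \<subseteq> V \<and> r \<in> D \<and> (\<forall>x\<in>D. x \<noteq> r \<longrightarrow> par x \<in> D) \<and>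
     (\<forall>x\<in>D. \<forall>\<tau>. aut \<tau> \<longrightarrow> \<tau> x \<in> D) \<and> (\<forall>x\<in>D. \<forall>\<tau>. aut \<tau> \<longrightarrow> (\<exists>j. (\<sigma> ^^ j) x = \<tau> x))"

lemma pow_mult_fix: assumes "\<forall>x\<in>V. (\<sigma> ^^ N) x = x" "x \<in> V" shows "(\<sigma> ^^ (N * q)) x = x"
proof (induction q)
  case 0 then show ?case by simp
next
  case (Suc q)
  have "(\<sigma> ^^ (N * Suc q)) x = (\<sigma> ^^ N) ((\<sigma> ^^ (N * q)) x)" by (simp add: funpow_add)
  then show ?case using Suc assms by simp
qed

lemma orbit_sym: assumes "aut \<sigma>" "x \<in> V" shows "\<exists>j'. (\<sigma> ^^ j') ((\<sigma> ^^ j) x) = x"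
proof -
  obtain N where N: "N > 0" "\<forall>x\<in>V. (\<sigma> ^^ N) x = x" using aut_period[OF assms(1)] by blast
  have "(\<sigma> ^^ ((N - 1) * j)) ((\<sigma> ^^ j) x) = (\<sigma> ^^ ((N - 1) * j + j)) x" by (simp add: funpow_add)
  also have "(N - 1) * j + j = N * j" using N(1) by (metis Suc_diff_1 add.commute mult_Suc)
  finally show ?thesis using pow_mult_fix[OF N(2) assms(2)] by metis
qed

lemma desc_in_D:
  assumes pc: "\<forall>x\<in>D. x \<noteq> r \<longrightarrow> par x \<in> D"
  shows "desc y x \<Longrightarrow> x \<in> D \<Longrightarrow> y \<in> D"
proof (induction "d x" arbitrary: x rule: less_induct)
  case less
  show ?case
  proof (cases "x = y")
    case True then show ?thesis using less by simp
  next
    case False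
    have xr: "x \<noteq> r" "desc y (par x)" using desc_par[OF less(2)] False by auto
    have "d (par x) < d x" using par(2)[OF desc_V2[OF less(2)] xr(1)] by simp
    then show ?thesis using less xr pc by blast
  qed
qed

lemma good_init: "good id {r}"
  unfolding good_def using aut_id rV autD(2) by (auto intro: exI[of _ 0]) (metis autD(2))

end


context rtc
begin

lemma step:
  assumes g: "good \<sigma> D" and DV: "D \<noteq> V"
  shows "\<exists>\<sigma>' D'. good \<sigma>' D' \<and> D \<subset> D'"
proof -
  have as: "aut \<sigma>" and DsV: "D \<subseteq> V" and rD: "r \<in> D" and pcD: "\<forall>x\<in>D. x \<noteq> r \<longrightarrow> par x \<in> D"
    and acD: "\<forall>x\<in>D. \<forall>\<tau>. aut \<tau> \<longrightarrow> \<tau> x \<in> D"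
    and orbD: "\<forall>x\<in>D. \<forall>\<tau>. aut \<tau> \<longrightarrow> (\<exists>j. (\<sigma> ^^ j) x = \<tau> x)"
    using g unfolding good_def by auto
  obtain c0 where "c0 \<in> V - D" using DsV DV by blast
  then obtain c where c: "c \<in> V - D" and cmin: "\<forall>y. y \<in> V - D \<longrightarrow> d c \<le> d y"
    using ex_has_least_nat[of "\<lambda>x. x \<in> V - D" c0 d] by blast
  have cV: "c \<in> V" and cD: "c \<notin> D" using c by auto
  have cr: "c \<noteq> r" using c rD by auto
  define v where "v = par c"
  have vV: "v \<in> V" and dv: "Suc (d v) = d c" using par[OF cV cr] v_def by auto
  have vD: "v \<in> D" using cmin vV dv by (metis DiffI Suc_n_not_le_n)
  obtain N where N: "N > 0" "\<forall>x\<in>V. (\<sigma> ^^ N) x = x" using aut_period[OF as] by blast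
  define s where "s = (LEAST s. 0 < s \<and> (\<sigma> ^^ s) v = v)"
  have s: "0 < s" "(\<sigma> ^^ s) v = v" unfolding s_def using N vV
    by (metis (mono_tags, lifting) LeastI)+
  have sN: "s \<le> N" unfolding s_def using N vV by (intro Least_le) auto
  have sl: "(\<sigma> ^^ t) v \<noteq> v" if "0 < t" "t < s" for t
    using not_less_Least[of t "\<lambda>s. 0 < s \<and> (\<sigma> ^^ s) v = v"] that unfolding s_def by blast
  have pmod: "(\<sigma> ^^ j) v = (\<sigma> ^^ (j mod s)) v" for j
  proof -
    have sq: "(\<sigma> ^^ (s * q)) v = v" for q
      by (induction q) (use s in \<open>simp_all add: funpow_add\<close>)
    have "(\<sigma> ^^ j) v = (\<sigma> ^^ (j mod s)) ((\<sigma> ^^ (s * (j div s))) v)"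
      by (metis funpow_add mod_mult_div_eq o_apply)
    then show ?thesis using sq by simp
  qed
  define C where "C = {y. y \<in> V \<and> y \<noteq> r \<and> par y = v \<and> (\<exists>\<tau>. aut \<tau> \<and> \<tau> c = y)}"
  have cC: "c \<in> C" unfolding C_def using cV cr v_def aut_id by auto
  have finC: "finite C" using finV unfolding C_def by simp
  define \<pi> where "\<pi> = \<sigma> ^^ s"
  have api: "aut \<pi>" unfolding \<pi>_def using aut_pow[OF as] .
  have piC: "\<pi> y \<in> C" if y: "y \<in> C" for y
  proof -
    have yy: "y \<in> V" "y \<noteq> r" "par y = v" using y C_def by auto
    obtain \<tau> where t: "aut \<tau>" "\<tau> c = y" using y C_def by auto
    have "\<pi> y \<in> V" using aut_V[OF api yy(1)] .
    moreover have "\<pi> y \<noteq> r" using aut_inj[OF api yy(1) rV] autD(2)[OF api] yy by simp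
    moreover have "par (\<pi> y) = v" using aut_par[OF api yy(1,2)] yy s(2) \<pi>_def by simp
    moreover have "(\<pi> \<circ> \<tau>) c = \<pi> y" using t by simp
    ultimately show ?thesis unfolding C_def using aut_comp[OF api t(1)] by blast
  qed
  have piinj: "inj_on \<pi> C" using autD(1)[OF api] unfolding bij_betw_def C_def
    by (metis (no_types, lifting) inj_on_subset mem_Collect_eq subsetI)
  have pibij: "bij_betw \<pi> C C"
    unfolding bij_betw_def using piinj endo_inj_surj[OF finC _ piinj] piC by blast
  obtain \<kappa> where kb: "bij_betw \<kappa> C C" and kr: "\<forall>y\<in>C. \<exists>i. (\<kappa> ^^ i) c = y"
    using cyc_perm[OF finC cC] by blast
  have kC: "\<kappa> y \<in> C" if "y \<in> C" for y using kb that bij_betwE by blast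
  define \<beta> where "\<beta> y = inv_into C \<pi> (\<kappa> y)" for y
  have bb: "bij_betw \<beta> C C" unfolding \<beta>_def
    using bij_betw_trans[OF kb bij_betw_inv_into[OF pibij]] by (simp add: comp_def)
  have bC: "\<beta> y \<in> C" if "y \<in> C" for y using bb that bij_betwE by blast
  have pib: "\<pi> (\<beta> y) = \<kappa> y" if "y \<in> C" for y
    unfolding \<beta>_def using pibij kC[OF that] by (meson bij_betw_inv_into_right)
  have orbC: "\<exists>\<tau>. aut \<tau> \<and> \<tau> c = y" if "y \<in> C" for y using that C_def by auto
  have tr: "\<forall>y\<in>C. \<exists>\<tau>. aut \<tau> \<and> \<tau> y = \<beta> y"
  proof
    fix y assume y: "y \<in> C"
    obtain t1 where t1: "aut t1" "t1 c = y" using orbC y by blast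
    obtain t2 where t2: "aut t2" "t2 c = \<beta> y" using orbC bC y by blast
    have "inv_into V t1 y = c" using t1 cV autD(1)[OF t1(1)] by (metis bij_betw_inv_into_left)
    then have "(t2 \<circ> inv_into V t1) y = \<beta> y" using t2 by simp
    then show "\<exists>\<tau>. aut \<tau> \<and> \<tau> y = \<beta> y" using aut_comp[OF t2(1) aut_inv[OF t1(1)]] by blast
  qed
  have Cprop: "\<forall>y\<in>C. y \<in> V \<and> y \<noteq> r \<and> par y = v" unfolding C_def by auto
  obtain \<rho> where ar: "aut \<rho>" and rb: "\<forall>y\<in>C. \<rho> y = \<beta> y"
    and rid: "\<forall>x. \<not> (\<exists>y\<in>C. desc y x) \<longrightarrow> \<rho> x = x"
    using lift[OF vV Cprop bb tr] by blast
  define \<sigma>' where "\<sigma>' = \<sigma> \<circ> \<rho>"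
  have as': "aut \<sigma>'" unfolding \<sigma>'_def using aut_comp[OF as ar] .
  have s'app: "\<sigma>' z = \<sigma> (\<rho> z)" for z unfolding \<sigma>'_def by simp
  define Orb where "Orb = {\<tau> c | \<tau>. aut \<tau>}"
  define D' where "D' = D \<union> Orb"
  have noSub: "\<not> (\<exists>y\<in>C. desc y x)" if x: "x \<in> D" for x
  proof
    assume "\<exists>y\<in>C. desc y x"
    then obtain y where y: "y \<in> C" "desc y x" by blast
    have yD: "y \<in> D" using desc_in_D[OF pcD y(2) x] .
    obtain \<tau> where t: "aut \<tau>" "\<tau> c = y" using orbC y(1) by blast
    have "inv_into V \<tau> y = c" using t cV autD(1)[OF t(1)] by (metis bij_betw_inv_into_left)
    then have "c \<in> D" using acD yD aut_inv[OF t(1)] by metis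
    then show False using cD by simp
  qed
  have powD: "(\<sigma>' ^^ j) x = (\<sigma> ^^ j) x \<and> (\<sigma> ^^ j) x \<in> D" if x: "x \<in> D" for x j
  proof (induction j)
    case 0 then show ?case using x by simp
  next
    case (Suc j)
    have "\<rho> ((\<sigma> ^^ j) x) = (\<sigma> ^^ j) x" using rid noSub Suc by blast
    have "(\<sigma>' ^^ Suc j) x = \<sigma>' ((\<sigma>' ^^ j) x)" by simp
    also have "\<dots> = \<sigma>' ((\<sigma> ^^ j) x)" using Suc by simp
    also have "\<dots> = \<sigma> (\<rho> ((\<sigma> ^^ j) x))" by (rule s'app)
    also have "\<dots> = (\<sigma> ^^ Suc j) x" using \<open>\<rho> ((\<sigma> ^^ j) x) = (\<sigma> ^^ j) x\<close> by simp
    finally have "(\<sigma>' ^^ Suc j) x = (\<sigma> ^^ Suc j) x" .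
    moreover have "(\<sigma> ^^ Suc j) x \<in> D" using acD as Suc by simp
    ultimately show ?case by simp
  qed
  have L1: "0 < t \<longrightarrow> t \<le> s \<longrightarrow> (\<sigma>' ^^ t) y = (\<sigma> ^^ t) (\<rho> y)" if y: "y \<in> C" for y t
  proof (induction t)
    case 0 then show ?case by simp
  next
    case (Suc t)
    show ?case
    proof (intro impI)
      assume st: "Suc t \<le> s"
      show "(\<sigma>' ^^ Suc t) y = (\<sigma> ^^ Suc t) (\<rho> y)"
      proof (cases "t = 0")
        case True then show ?thesis using s'app by simp
      next
        case False
        then have IH: "(\<sigma>' ^^ t) y = (\<sigma> ^^ t) (\<rho> y)" using Suc st by simp
        define z where "z = (\<sigma> ^^ t) (\<rho> y)"
        have ry: "\<rho> y \<in> C" using rb bC y by simp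
        have ryp: "\<rho> y \<in> V" "\<rho> y \<noteq> r" "par (\<rho> y) = v" using ry Cprop by auto
        have ast: "aut (\<sigma> ^^ t)" using aut_pow[OF as] .
        have "\<rho> z = z"
        proof (rule rid[rule_format], rule notI)
          assume "\<exists>y2\<in>C. desc y2 z"
          then obtain y2 where y2: "y2 \<in> C" "desc y2 z" by blast
          have "d z = d (\<rho> y)" unfolding z_def using aut_dep[OF ast ryp(1)] .
          also have "\<dots> = d y2" using ryp Cprop y2(1) par(2) by metis
          finally have "y2 = z" using desc_eq[OF y2(2)] by simp
          then have "par z = v" using Cprop y2(1) by simp
          moreover have "par z = (\<sigma> ^^ t) v" unfolding z_def using aut_par[OF ast ryp(1,2)] ryp(3) by simp
          ultimately show False using sl[of t] False st by simp
        qed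
        have "(\<sigma>' ^^ Suc t) y = \<sigma>' ((\<sigma>' ^^ t) y)" by simp
        also have "\<dots> = \<sigma>' z" using IH z_def by simp
        also have "\<dots> = \<sigma> z" using s'app \<open>\<rho> z = z\<close> by simp
        finally show ?thesis unfolding z_def by simp
      qed
    qed
  qed
  have K: "(\<sigma>' ^^ s) y = \<kappa> y" if y: "y \<in> C" for y
    using L1[OF y, of s] s(1) rb y pib unfolding \<pi>_def by simp
  have Kpow: "(\<sigma>' ^^ (s * i)) c = (\<kappa> ^^ i) c \<and> (\<kappa> ^^ i) c \<in> C" for i
  proof (induction i)
    case 0 then show ?case using cC by simp
  next
    case (Suc i)
    have "(\<sigma>' ^^ (s * Suc i)) c = (\<sigma>' ^^ s) ((\<sigma>' ^^ (s * i)) c)" by (simp add: funpow_add)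
    also have "\<dots> = \<kappa> ((\<kappa> ^^ i) c)" using Suc K by simp
    finally show ?case using kC Suc by simp
  qed
  have reach: "\<exists>j. (\<sigma>' ^^ j) c = y" if y: "y \<in> Orb" for y
  proof -
    obtain \<tau> where t: "aut \<tau>" "\<tau> c = y" using y Orb_def by auto
    have yV: "y \<in> V" using aut_V[OF t(1) cV] t(2) by simp
    have yr: "y \<noteq> r" using aut_inj[OF t(1) cV rV] autD(2)[OF t(1)] cr t(2) by simp
    have py: "par y = \<tau> v" using aut_par[OF t(1) cV cr] t(2) v_def by simp
    obtain j0 where j0: "(\<sigma> ^^ j0) v = \<tau> v" using orbD vD t(1) by blast
    define tt where "tt = j0 mod s"
    have tts: "tt < s" using s(1) tt_def by simp
    have stt: "(\<sigma> ^^ tt) v = \<tau> v" using pmod j0 tt_def by simp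
    define y' where "y' = (\<sigma> ^^ (N - tt)) y"
    have aN: "aut (\<sigma> ^^ (N - tt))" using aut_pow[OF as] .
    have y'y: "(\<sigma> ^^ tt) y' = y"
    proof -
      have "(\<sigma> ^^ tt) y' = (\<sigma> ^^ (tt + (N - tt))) y" unfolding y'_def by (simp add: funpow_add)
      also have "tt + (N - tt) = N" using tts sN by simp
      finally show ?thesis using N(2) yV by simp
    qed
    have y'C: "y' \<in> C"
    proof -
      have "y' \<in> V" unfolding y'_def using aut_V[OF aN yV] .
      moreover have "y' \<noteq> r" unfolding y'_def using aut_inj[OF aN yV rV] autD(2)[OF aN] yr by simp
      moreover have "par y' = v"
      proof -
        have "par y' = (\<sigma> ^^ (N - tt)) ((\<sigma> ^^ tt) v)" unfolding y'_def using aut_par[OF aN yV yr] py stt by simp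
        also have "\<dots> = (\<sigma> ^^ (N - tt + tt)) v" by (simp add: funpow_add)
        also have "N - tt + tt = N" using tts sN by simp
        finally show ?thesis using N(2) vV by simp
      qed
      moreover have "((\<sigma> ^^ (N - tt)) \<circ> \<tau>) c = y'" unfolding y'_def using t by simp
      ultimately show ?thesis unfolding C_def using aut_comp[OF aN t(1)] by blast
    qed
    show ?thesis
    proof (cases "tt = 0")
      case True
      then have "y' = y" using y'y by simp
      then obtain i where "(\<kappa> ^^ i) c = y" using kr y'C by blast
      then show ?thesis using Kpow by metis
    next
      case False
      have "y' \<in> \<beta> ` C" using bij_betw_imp_surj_on[OF bb] y'C by simp
      then obtain w where w: "w \<in> C" "\<beta> w = y'" by (auto simp del: \<beta>_def)
      obtain i where i: "(\<kappa> ^^ i) c = w" using kr w(1) by blast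
      have "(\<sigma>' ^^ (tt + s * i)) c = (\<sigma>' ^^ tt) ((\<sigma>' ^^ (s * i)) c)" by (simp add: funpow_add)
      also have "\<dots> = (\<sigma>' ^^ tt) w" using Kpow i by simp
      also have "\<dots> = (\<sigma> ^^ tt) (\<rho> w)" using L1[OF w(1), of tt] False tts by simp
      also have "\<dots> = y" using rb w y'y by simp
      finally show ?thesis by blast
    qed
  qed
  have good': "good \<sigma>' D'"
    unfolding good_def
  proof (intro conjI ballI allI impI)
    show "aut \<sigma>'" by (rule as')
    show "D' \<subseteq> V" unfolding D'_def Orb_def using DsV aut_V cV by auto
    show "r \<in> D'" unfolding D'_def using rD by simp
    fix x
    assume x: "x \<in> D'"
    {
      assume xr: "x \<noteq> r"
      show "par x \<in> D'"
      proof (cases "x \<in> D")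
        case True then show ?thesis using pcD xr D'_def by simp
      next
        case False
        then obtain \<tau> where t: "aut \<tau>" "\<tau> c = x" using x D'_def Orb_def by auto
        then have "par x = \<tau> v" using aut_par[OF t(1) cV cr] v_def by simp
        then show ?thesis using acD vD t(1) D'_def by simp
      qed
    }
    fix \<tau> assume t: "aut \<tau>"
    show "\<tau> x \<in> D'"
    proof (cases "x \<in> D")
      case True then show ?thesis using acD t D'_def by simp
    next
      case False
      then obtain \<tau>1 where t1: "aut \<tau>1" "\<tau>1 c = x" using x D'_def Orb_def by auto
      then have "(\<tau> \<circ> \<tau>1) c = \<tau> x" by simp
      then have "\<tau> x \<in> Orb" using aut_comp[OF t t1(1)] unfolding Orb_def by (auto intro!: exI[of _ "\<tau> \<circ> \<tau>1"])
      then show ?thesis unfolding D'_def by simp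
    qed
    show "\<exists>j. (\<sigma>' ^^ j) x = \<tau> x"
    proof (cases "x \<in> D")
      case True
      then obtain j where "(\<sigma> ^^ j) x = \<tau> x" using orbD t by blast
      then show ?thesis using powD[OF True, of j] by auto
    next
      case False
      then obtain \<tau>1 where t1: "aut \<tau>1" "\<tau>1 c = x" using x D'_def Orb_def by auto
      then have "(\<tau> \<circ> \<tau>1) c = \<tau> x" by simp
      then have "\<tau> x \<in> Orb" using aut_comp[OF t t1(1)] unfolding Orb_def by (auto intro!: exI[of _ "\<tau> \<circ> \<tau>1"])
      then obtain j2 where j2: "(\<sigma>' ^^ j2) c = \<tau> x" using reach by blast
      have "x \<in> Orb" using t1 Orb_def by blast
      then obtain j1 where j1: "(\<sigma>' ^^ j1) c = x" using reach by blast
      obtain j3 where j3: "(\<sigma>' ^^ j3) ((\<sigma>' ^^ j1) c) = c" using orbit_sym[OF as' cV] by blast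
      have "(\<sigma>' ^^ (j2 + j3)) x = (\<sigma>' ^^ j2) ((\<sigma>' ^^ j3) x)" by (simp add: funpow_add)
      also have "\<dots> = \<tau> x" using j1 j2 j3 by simp
      finally show ?thesis by blast
    qed
  qed
  moreover have "D \<subset> D'"
  proof -
    have "c \<in> Orb" unfolding Orb_def using aut_id by (auto intro!: exI[of _ id])
    then show ?thesis unfolding D'_def using cD by auto
  qed
  ultimately show ?thesis by blast
qed

lemma good_all: "\<exists>\<sigma>. good \<sigma> V"
proof -
  have "\<forall>\<sigma> D. good \<sigma> D \<longrightarrow> card (V - D) = n \<longrightarrow> (\<exists>\<sigma>. good \<sigma> V)" for n
  proof (induction n rule: less_induct)
    case (less n)
    show ?case
    proof (intro allI impI)
      fix \<sigma> D assume g: "good \<sigma> D" and n: "card (V - D) = n"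
      show "\<exists>\<sigma>. good \<sigma> V"
      proof (cases "D = V")
        case True then show ?thesis using g by blast
      next
        case False
        obtain \<sigma>' D' where g': "good \<sigma>' D'" "D \<subset> D'" using step[OF g False] by blast
        have "D' \<subseteq> V" using g' unfolding good_def by simp
        then have "card (V - D') < card (V - D)" using g'(2) finV
          by (intro psubset_card_mono) auto
        then show ?thesis using less n g' by blast
      qed
    qed
  qed
  then show ?thesis using good_init by blast
qed

end


lemma pow_mod_gen: assumes "(f ^^ M) y = y" shows "(f ^^ j) y = (f ^^ (j mod M)) y"
proof -
  have sq: "(f ^^ (M * q)) y = y" for q
    by (induction q) (use assms in \<open>simp_all add: funpow_add\<close>)
  have "(f ^^ j) y = (f ^^ (j mod M)) ((f ^^ (M * (j div M))) y)"
    by (metis funpow_add mod_mult_div_eq o_apply)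
  then show ?thesis using sq by simp
qed

context rtc
begin

lemma orbit_aut: "orbit_of (rtree_aut V E c r) x = {\<tau> x | \<tau>. aut \<tau>}"
  unfolding orbit_of_def aut_def by auto

lemma pow_inj_fix: assumes "aut \<sigma>" "y \<in> V" "i \<le> j" "(\<sigma> ^^ i) y = (\<sigma> ^^ j) y"
  shows "(\<sigma> ^^ (j - i)) y = y"
proof -
  have "(\<sigma> ^^ j) y = (\<sigma> ^^ i) ((\<sigma> ^^ (j - i)) y)" using assms(3)
    by (metis funpow_add le_add_diff_inverse o_apply)
  then have "(\<sigma> ^^ i) ((\<sigma> ^^ (j - i)) y) = (\<sigma> ^^ i) y" using assms(4) by simp
  moreover have "(\<sigma> ^^ (j - i)) y \<in> V" using aut_V[OF aut_pow[OF assms(1)] assms(2)] .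
  ultimately show ?thesis using aut_inj[OF aut_pow[OF assms(1)]] assms(2) by blast
qed

lemma final_sigma:
  assumes eq: "\<forall>l1\<in>tree_leaves V E r. \<forall>l2\<in>tree_leaves V E r.
           card (orbit_of (rtree_aut V E c r) l1) = card (orbit_of (rtree_aut V E c r) l2)"
  shows "\<exists>\<sigma> m. aut \<sigma> \<and> 0 < m \<and> (\<forall>x\<in>V. (\<sigma> ^^ m) x = x) \<and>
     (\<forall>a<m. \<forall>b<m. (\<forall>x\<in>V. (\<sigma> ^^ a) x = (\<sigma> ^^ b) x) \<longrightarrow> a = b) \<and>
     (\<forall>x\<in>V. orbit_of (rtree_aut V E c r) x = {(\<sigma> ^^ j) x | j. j < m}) \<and>
     (\<forall>l\<in>tree_leaves V E r. \<forall>a. (\<sigma> ^^ a) l = l \<longrightarrow> (\<forall>x\<in>V. (\<sigma> ^^ a) x = x))"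
proof -
  obtain \<sigma> where g: "good \<sigma> V" using good_all by blast
  have as: "aut \<sigma>" and orb: "\<forall>x\<in>V. \<forall>\<tau>. aut \<tau> \<longrightarrow> (\<exists>j. (\<sigma> ^^ j) x = \<tau> x)"
    using g unfolding good_def by auto
  obtain N where N: "N > 0" "\<forall>x\<in>V. (\<sigma> ^^ N) x = x" using aut_period[OF as] by blast
  define m where "m = (LEAST m. 0 < m \<and> (\<forall>x\<in>V. (\<sigma> ^^ m) x = x))"
  have "0 < m \<and> (\<forall>x\<in>V. (\<sigma> ^^ m) x = x)" unfolding m_def
    by (rule LeastI[of _ N]) (use N in auto)
  then have m: "0 < m" "\<forall>x\<in>V. (\<sigma> ^^ m) x = x" by auto
  have mless: "\<not> (\<forall>x\<in>V. (\<sigma> ^^ t) x = x)" if "0 < t" "t < m" for t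
    using not_less_Least[of t "\<lambda>m. 0 < m \<and> (\<forall>x\<in>V. (\<sigma> ^^ m) x = x)"] that unfolding m_def by blast
  have dist: "\<forall>a<m. \<forall>b<m. (\<forall>x\<in>V. (\<sigma> ^^ a) x = (\<sigma> ^^ b) x) \<longrightarrow> a = b"
  proof (intro allI impI)
    fix a b assume ab: "a < m" "b < m" "\<forall>x\<in>V. (\<sigma> ^^ a) x = (\<sigma> ^^ b) x"
    show "a = b"
    proof (rule ccontr)
      assume "a \<noteq> b"
      then consider "a < b" | "b < a" by linarith
      then show False
      proof cases
        case 1
        have "\<forall>x\<in>V. (\<sigma> ^^ (b - a)) x = x" using pow_inj_fix[OF as _ less_imp_le[OF 1]] ab(3) by blast
        then show False using mless[of "b - a"] 1 ab(2) by simp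
      next
        case 2
        have "\<forall>x\<in>V. (\<sigma> ^^ (a - b)) x = x"
        proof
          fix x assume x: "x \<in> V"
          have "(\<sigma> ^^ b) x = (\<sigma> ^^ a) x" using ab(3) x by simp
          then show "(\<sigma> ^^ (a - b)) x = x" using pow_inj_fix[OF as x less_imp_le[OF 2]] by simp
        qed
        then show False using mless[of "a - b"] 2 ab(1) by simp
      qed
    qed
  qed
  have orbm: "orbit_of (rtree_aut V E c r) x = {(\<sigma> ^^ j) x | j. j < m}" if x: "x \<in> V" for x
  proof -
    have "{\<tau> x | \<tau>. aut \<tau>} = {(\<sigma> ^^ j) x | j. j < m}"
    proof
      show "{\<tau> x | \<tau>. aut \<tau>} \<subseteq> {(\<sigma> ^^ j) x | j. j < m}"
      proof
        fix y assume "y \<in> {\<tau> x | \<tau>. aut \<tau>}"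
        then obtain \<tau> where "aut \<tau>" "y = \<tau> x" by blast
        then obtain j where "(\<sigma> ^^ j) x = y" using orb x by blast
        then have "(\<sigma> ^^ (j mod m)) x = y" using pow_mod_gen[of m \<sigma> x j] m x by simp
        then show "y \<in> {(\<sigma> ^^ j) x | j. j < m}" using m(1) by auto
      qed
      show "{(\<sigma> ^^ j) x | j. j < m} \<subseteq> {\<tau> x | \<tau>. aut \<tau>}" using aut_pow[OF as] by blast
    qed
    then show ?thesis using orbit_aut by simp
  qed
  define M where "M l = (LEAST M. 0 < M \<and> (\<sigma> ^^ M) l = l)" for l
  have M: "0 < M l" "(\<sigma> ^^ M l) l = l" if lv: "l \<in> V" for l
  proof -
    have "0 < M l \<and> (\<sigma> ^^ M l) l = l" unfolding M_def
      by (rule LeastI[of _ N]) (use N lv in auto)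
    then show "0 < M l" "(\<sigma> ^^ M l) l = l" by auto
  qed
  have Mless: "(\<sigma> ^^ t) l \<noteq> l" if "0 < t" "t < M l" for t l
    using not_less_Least[of t "\<lambda>M. 0 < M \<and> (\<sigma> ^^ M) l = l"] that unfolding M_def by blast
  have cardM: "card (orbit_of (rtree_aut V E c r) l) = M l" if l: "l \<in> V" for l
  proof -
    have "orbit_of (rtree_aut V E c r) l = (\<lambda>j. (\<sigma> ^^ j) l) ` {..<M l}"
    proof
      show "orbit_of (rtree_aut V E c r) l \<subseteq> (\<lambda>j. (\<sigma> ^^ j) l) ` {..<M l}"
      proof
        fix y assume "y \<in> orbit_of (rtree_aut V E c r) l"
        then obtain j where "y = (\<sigma> ^^ j) l" using orbm l by auto
        then have "y = (\<sigma> ^^ (j mod M l)) l" using pow_mod_gen[of "M l" \<sigma> l j] M l by simp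
        then show "y \<in> (\<lambda>j. (\<sigma> ^^ j) l) ` {..<M l}" using M(1)[OF l] by auto
      qed
      show "(\<lambda>j. (\<sigma> ^^ j) l) ` {..<M l} \<subseteq> orbit_of (rtree_aut V E c r) l"
        using orbit_aut aut_pow[OF as] by auto
    qed
    moreover have "inj_on (\<lambda>j. (\<sigma> ^^ j) l) {..<M l}"
    proof (rule inj_onI)
      fix i j assume ij: "i \<in> {..<M l}" "j \<in> {..<M l}" "(\<sigma> ^^ i) l = (\<sigma> ^^ j) l"
      show "i = j"
      proof (rule ccontr)
        assume "i \<noteq> j"
        then consider "i < j" | "j < i" by linarith
        then show False
        proof cases
          case 1
          then have "(\<sigma> ^^ (j - i)) l = l" using pow_inj_fix[OF as l] ij(3) by simp
          moreover have "j - i < M l" using 1 ij(2) by simp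
          ultimately show False using Mless[of "j - i" l] 1 by simp
        next
          case 2
          then have "(\<sigma> ^^ (i - j)) l = l" using pow_inj_fix[OF as l] ij(3) by simp
          moreover have "i - j < M l" using 2 ij(1) by simp
          ultimately show False using Mless[of "i - j" l] 2 by simp
        qed
      qed
    qed
    ultimately show ?thesis by (simp add: card_image)
  qed
  have semi: "\<forall>l\<in>tree_leaves V E r. \<forall>a. (\<sigma> ^^ a) l = l \<longrightarrow> (\<forall>x\<in>V. (\<sigma> ^^ a) x = x)"
  proof (intro ballI allI impI)
    fix l a x assume l: "l \<in> tree_leaves V E r" and a: "(\<sigma> ^^ a) l = l" and x: "x \<in> V"
    have lV: "l \<in> V" using l unfolding tree_leaves_def by simp
    define M0 where "M0 = M l"
    have allfix: "(\<sigma> ^^ M0) l' = l'" if l': "l' \<in> tree_leaves V E r" for l'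
    proof -
      have l'V: "l' \<in> V" using l' unfolding tree_leaves_def by simp
      have "card (orbit_of (rtree_aut V E c r) l) = card (orbit_of (rtree_aut V E c r) l')"
        using eq l l' by blast
      then have "M l' = M0" using cardM[OF lV] cardM[OF l'V] M0_def by simp
      then show ?thesis using M(2)[OF l'V] by simp
    qed
    have fixall: "(\<sigma> ^^ M0) y = y" if y: "y \<in> V" for y
    proof -
      obtain l' where "desc y l'" "l' \<in> tree_leaves V E r" using leaf_exists[OF y] by blast
      then show ?thesis using fix_desc[OF aut_pow[OF as]] allfix by blast
    qed
    have "(\<sigma> ^^ (a mod M0)) l = l" using pow_mod_gen[of M0 \<sigma> l a] a allfix[OF l] by simp
    then have "a mod M0 = 0" using Mless[of "a mod M0" l] M(1)[OF lV] M0_def by fastforce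
    moreover have "M0 * (a div M0) + a mod M0 = a" by (rule mult_div_mod_eq)
    ultimately have "a = M0 * (a div M0)" by simp
    then have "(\<sigma> ^^ a) x = (\<sigma> ^^ (M0 * (a div M0))) x" by simp
    also have "\<dots> = x" using pow_mult_fix[of M0 \<sigma> x "a div M0"] fixall x by blast
    finally show "(\<sigma> ^^ a) x = x" .
  qed
  show ?thesis using as m dist orbm semi by blast
qed

end


lemma pow_mod_gen': assumes "(f ^^ M) y = y" shows "(f ^^ j) y = (f ^^ (j mod M)) y"
proof -
  have sq: "(f ^^ (M * q)) y = y" for q
    by (induction q) (use assms in \<open>simp_all add: funpow_add\<close>)
  have "(f ^^ j) y = (f ^^ (j mod M)) ((f ^^ (M * (j div M))) y)"
    by (metis funpow_add mod_mult_div_eq o_apply)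
  then show ?thesis using sq by simp
qed

lemma graph_aut_pow:
  assumes "\<sigma> \<in> graph_aut V E c"
  shows "bij_betw (\<sigma> ^^ j) V V \<and> (\<forall>x\<in>V. \<forall>y\<in>V. E ((\<sigma> ^^ j) x) ((\<sigma> ^^ j) y) \<longleftrightarrow> E x y) \<and>
         (\<forall>x\<in>V. c ((\<sigma> ^^ j) x) = c x)"
proof (induction j)
  case 0 then show ?case by (simp add: bij_betw_id[unfolded id_def])
next
  case (Suc j)
  have a: "bij_betw \<sigma> V V" "\<forall>x\<in>V. \<forall>y\<in>V. E (\<sigma> x) (\<sigma> y) \<longleftrightarrow> E x y" "\<forall>x\<in>V. c (\<sigma> x) = c x"
    using assms unfolding graph_aut_def by auto
  have jV: "\<forall>x\<in>V. (\<sigma> ^^ j) x \<in> V" using Suc bij_betwE by blast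
  have "bij_betw (\<sigma> ^^ Suc j) V V" using bij_betw_trans[of "\<sigma> ^^ j" V V \<sigma> V] Suc a(1) by simp
  moreover have "\<forall>x\<in>V. \<forall>y\<in>V. E ((\<sigma> ^^ Suc j) x) ((\<sigma> ^^ Suc j) y) \<longleftrightarrow> E x y"
    using a(2) Suc jV by simp
  moreover have "\<forall>x\<in>V. c ((\<sigma> ^^ Suc j) x) = c x" using a(3) Suc jV by simp
  ultimately show ?case by blast
qed

lemma H_construct:
  fixes V :: "'a set" and E :: "'a \<Rightarrow> 'a \<Rightarrow> bool" and c :: "'a \<Rightarrow> 'c" and \<sigma> :: "'a \<Rightarrow> 'a"
    and L :: "'a set" and Orb :: "'a \<Rightarrow> 'a set" and m :: nat
  assumes finV: "finite V" and sg: "simple_graph V E"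
    and m0: "0 < m" and mper: "\<forall>x\<in>V. (\<sigma> ^^ m) x = x"
    and mdist: "\<forall>a<m. \<forall>b<m. (\<forall>x\<in>V. (\<sigma> ^^ a) x = (\<sigma> ^^ b) x) \<longrightarrow> a = b"
    and saut: "\<sigma> \<in> graph_aut V E c"
    and orb: "\<forall>x\<in>V. Orb x = {(\<sigma> ^^ j) x | j. j < m}"
    and LV: "L \<subseteq> V"
    and semi: "\<forall>l\<in>L. \<forall>a. (\<sigma> ^^ a) l = l \<longrightarrow> (\<forall>x\<in>V. (\<sigma> ^^ a) x = x)"
  shows "\<exists>(VH :: ('a + nat) set) (EH :: 'a + nat \<Rightarrow> 'a + nat \<Rightarrow> bool) (cH :: 'a + nat \<Rightarrow> 'c + nat).
     finite VH \<and> simple_graph VH EH \<and>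
     Inl ` V \<subseteq> VH \<and>
     (\<forall>x\<in>V. \<forall>y\<in>V. EH (Inl x) (Inl y) \<longleftrightarrow> E x y) \<and>
     (\<forall>x\<in>V. cH (Inl x) = Inl (c x)) \<and>
     (\<forall>\<tau>\<in>graph_aut VH EH cH. \<tau> ` (Inl ` V) = Inl ` V) \<and>
     (\<forall>\<tau>\<in>graph_aut VH EH cH. (\<forall>v\<in>V. \<tau> (Inl v) = Inl v) \<longrightarrow> (\<forall>x\<in>VH. \<tau> x = x)) \<and>
     (\<forall>\<tau>\<in>graph_aut VH EH cH. \<forall>l\<in>L. \<tau> (Inl l) = Inl l \<longrightarrow> (\<forall>x\<in>VH. \<tau> x = x)) \<and>
     (\<forall>v\<in>V. orbit_of (graph_aut VH EH cH) (Inl v) = Inl ` Orb v)"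
proof -
  have pw: "bij_betw (\<sigma> ^^ j) V V" "\<And>x y. x \<in> V \<Longrightarrow> y \<in> V \<Longrightarrow> E ((\<sigma> ^^ j) x) ((\<sigma> ^^ j) y) \<longleftrightarrow> E x y"
    "\<And>x. x \<in> V \<Longrightarrow> c ((\<sigma> ^^ j) x) = c x" for j
    using graph_aut_pow[OF saut, of j] by auto
  have pV: "(\<sigma> ^^ j) x \<in> V" if "x \<in> V" for j x using pw(1) that bij_betwE by blast
  have pinj: "(\<sigma> ^^ j) x = (\<sigma> ^^ j) y \<longleftrightarrow> x = y" if "x \<in> V" "y \<in> V" for j x y
    using pw(1)[of j] that unfolding bij_betw_def inj_on_def by blast
  have pmod: "(\<sigma> ^^ j) x = (\<sigma> ^^ (j mod m)) x" if "x \<in> V" for j x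
    using pow_mod_gen'[of m \<sigma> x j] mper that by simp
  have EV: "E x y \<Longrightarrow> x \<in> V \<and> y \<in> V" and Esym: "E x y \<Longrightarrow> E y x" and Eirr: "\<not> E x x" for x y
    using sg unfolding simple_graph_def by blast+
  define n where "n = card V"
  obtain e where e: "bij_betw e {0..<n} V" using ex_bij_betw_nat_finite[OF finV] n_def by blast
  have eV: "i < n \<Longrightarrow> e i \<in> V" for i using e bij_betwE by fastforce
  have eS: "x \<in> V \<Longrightarrow> \<exists>i<n. e i = x" for x using e unfolding bij_betw_def by force
  define W :: "nat \<Rightarrow> 'a + nat" where "W j = Inr (prod_encode (j, 0))" for j
  define U :: "nat \<Rightarrow> nat \<Rightarrow> 'a + nat" where "U j i = Inr (prod_encode (j, Suc i))" for j i
  have WU_simps[simp]: "W j = W j' \<longleftrightarrow> j = j'" "U j i = U j' i' \<longleftrightarrow> j = j' \<and> i = i'"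
    "W j \<noteq> U j' i'" "U j' i' \<noteq> W j" "Inl x \<noteq> W j" "W j \<noteq> Inl x" "Inl x \<noteq> U j i" "U j i \<noteq> Inl x"
    for j j' i i' x unfolding W_def U_def by auto
  define VH where "VH = Inl ` V \<union> W ` {..<m} \<union> (\<lambda>(j, i). U j i) ` ({..<m} \<times> {..<n})"
  define EH where "EH a b \<longleftrightarrow> (\<exists>x y. a = Inl x \<and> b = Inl y \<and> E x y) \<or>
      (\<exists>j<m. \<exists>i<n. (a = W j \<and> b = U j i) \<or> (a = U j i \<and> b = W j)) \<or>
      (\<exists>j<m. \<exists>i<n. (a = U j i \<and> b = Inl ((\<sigma> ^^ j) (e i))) \<or> (a = Inl ((\<sigma> ^^ j) (e i)) \<and> b = U j i))"
    for a b
  define cH :: "'a + nat \<Rightarrow> 'c + nat" where "cH = case_sum (\<lambda>x. Inl (c x)) (\<lambda>k. Inr (snd (prod_decode k)))"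
  have cH_simps[simp]: "cH (Inl x) = Inl (c x)" "cH (W j) = Inr 0" "cH (U j i) = Inr (Suc i)" for x j i
    unfolding cH_def W_def U_def by (auto simp: prod_encode_inverse)
  have VH_cases: "z \<in> VH \<Longrightarrow> (\<exists>x\<in>V. z = Inl x) \<or> (\<exists>j<m. z = W j) \<or> (\<exists>j<m. \<exists>i<n. z = U j i)" for z
    unfolding VH_def by auto
  have VH_I: "x \<in> V \<Longrightarrow> Inl x \<in> VH" "j < m \<Longrightarrow> W j \<in> VH" "j < m \<Longrightarrow> i < n \<Longrightarrow> U j i \<in> VH" for x j i
    unfolding VH_def by auto
  have VH_Inl: "Inl x \<in> VH \<longleftrightarrow> x \<in> V" for x unfolding VH_def W_def U_def by auto
  have EH_LL: "EH (Inl x) (Inl y) \<longleftrightarrow> E x y" for x y unfolding EH_def by auto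
  have EH_WU: "EH (W k) (U k' i) \<longleftrightarrow> k = k' \<and> k < m \<and> i < n" for k k' i unfolding EH_def by auto
  have EH_UL: "EH (U k i) (Inl y) \<longleftrightarrow> k < m \<and> i < n \<and> y = (\<sigma> ^^ k) (e i)" for k i y unfolding EH_def by auto
  have finVH: "finite VH" unfolding VH_def using finV by simp
  have sgH: "simple_graph VH EH"
    unfolding simple_graph_def
  proof (intro conjI allI impI)
    fix a b assume "EH a b"
    then show "a \<in> VH" "b \<in> VH" "EH b a" unfolding EH_def using VH_I EV eV pV Esym by blast+
  next
    fix a show "\<not> EH a a" unfolding EH_def using Eirr by auto
  qed

  have EHsym: "EH a b \<Longrightarrow> EH b a" for a b using sgH unfolding simple_graph_def by blast
  define Phi :: "nat \<Rightarrow> 'a + nat \<Rightarrow> 'a + nat" where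
    "Phi j z = (case z of Inl x \<Rightarrow> Inl ((\<sigma> ^^ j) x)
       | Inr k \<Rightarrow> Inr (prod_encode ((fst (prod_decode k) + j) mod m, snd (prod_decode k))))" for j z
  have Phi_simps: "Phi j (Inl x) = Inl ((\<sigma> ^^ j) x)" "Phi j (W a) = W ((a + j) mod m)"
    "Phi j (U a i) = U ((a + j) mod m) i" for j x a i
    unfolding Phi_def W_def U_def by (auto simp: prod_encode_inverse)
  have Phi_VH: "Phi j z \<in> VH" if "z \<in> VH" for j z
    using VH_cases[OF that] Phi_simps VH_I pV m0 by auto
  have Phi_E: "EH (Phi j z1) (Phi j z2)" if "EH z1 z2" for j z1 z2
  proof -
    have m': "(a + j) mod m < m" for a using m0 by simp
    have sh: "(\<sigma> ^^ j) ((\<sigma> ^^ a) (e i)) = (\<sigma> ^^ ((a + j) mod m)) (e i)" if "i < n" for a i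
    proof -
      have "(\<sigma> ^^ j) ((\<sigma> ^^ a) (e i)) = (\<sigma> ^^ (j + a)) (e i)"
        by (simp add: funpow_add)
      also have "j + a = a + j" by simp
      finally have "(\<sigma> ^^ j) ((\<sigma> ^^ a) (e i)) = (\<sigma> ^^ (a + j)) (e i)" .
      then show ?thesis using pmod[OF eV[OF that], of "a + j"] by simp
    qed
    from that consider (LL) x y where "z1 = Inl x" "z2 = Inl y" "E x y"
      | (WU) a i where "a < m" "i < n" "z1 = W a \<and> z2 = U a i \<or> z1 = U a i \<and> z2 = W a"
      | (UL) a i where "a < m" "i < n" "z1 = U a i \<and> z2 = Inl ((\<sigma> ^^ a) (e i)) \<or> z1 = Inl ((\<sigma> ^^ a) (e i)) \<and> z2 = U a i"
      unfolding EH_def by blast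
    then show ?thesis
    proof cases
      case LL then show ?thesis using Phi_simps EH_LL pw(2) EV by simp
    next
      case WU
      have "EH (W ((a + j) mod m)) (U ((a + j) mod m) i)" using EH_WU m' WU by simp
      then show ?thesis using WU Phi_simps EHsym by auto
    next
      case UL
      have "EH (U ((a + j) mod m) i) (Inl ((\<sigma> ^^ j) ((\<sigma> ^^ a) (e i))))" using EH_UL m' UL sh by simp
      then show ?thesis using UL Phi_simps EHsym by auto
    qed
  qed
  have Phi_inv: "Phi (m - j) (Phi j z) = z" if "z \<in> VH" "j \<le> m" for j z
  proof -
    have ar: "((a + j) mod m + (m - j)) mod m = a" if "a < m" for a
    proof -
      have "((a + j) mod m + (m - j)) mod m = (a + j + (m - j)) mod m" by (simp add: mod_add_left_eq)
      also have "a + j + (m - j) = a + m" using \<open>j \<le> m\<close> by simp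
      finally show ?thesis using that by simp
    qed
    have ix: "(\<sigma> ^^ (m - j)) ((\<sigma> ^^ j) x) = x" if "x \<in> V" for x
    proof -
      have "(\<sigma> ^^ (m - j)) ((\<sigma> ^^ j) x) = (\<sigma> ^^ (m - j + j)) x" by (simp add: funpow_add)
      then show ?thesis using \<open>j \<le> m\<close> mper that by simp
    qed
    show ?thesis using VH_cases[OF that(1)] Phi_simps ar ix by auto
  qed
  have Phi_aut: "Phi j \<in> graph_aut VH EH cH" if jm: "j \<le> m" for j
  proof -
    have inj: "inj_on (Phi j) VH" by (rule inj_on_inverseI[of _ "Phi (m - j)"]) (use Phi_inv jm in auto)
    have "Phi j ` VH \<subseteq> VH" using Phi_VH by auto
    then have bij: "bij_betw (Phi j) VH VH" unfolding bij_betw_def using inj endo_inj_surj[OF finVH] by blast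
    have edges: "\<forall>x\<in>VH. \<forall>y\<in>VH. EH (Phi j x) (Phi j y) \<longleftrightarrow> EH x y"
    proof (intro ballI iffI)
      fix x y assume xy: "x \<in> VH" "y \<in> VH"
      show "EH x y \<Longrightarrow> EH (Phi j x) (Phi j y)" by (rule Phi_E)
      assume "EH (Phi j x) (Phi j y)"
      then have "EH (Phi (m - j) (Phi j x)) (Phi (m - j) (Phi j y))" by (rule Phi_E)
      then show "EH x y" using Phi_inv xy jm by simp
    qed
    have col: "\<forall>x\<in>VH. cH (Phi j x) = cH x"
    proof
      fix x assume "x \<in> VH"
      then consider (L) y where "y \<in> V" "x = Inl y" | (W) a where "x = W a" | (U) a i where "x = U a i"
        using VH_cases by blast
      then show "cH (Phi j x) = cH x"
        by cases (simp_all add: Phi_simps pw(3))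
    qed
    show ?thesis unfolding graph_aut_def using bij edges col by blast
  qed

  have tau: "\<exists>k0<m. (\<forall>x\<in>V. \<tau> (Inl x) = Inl ((\<sigma> ^^ k0) x)) \<and>
      (\<forall>j<m. \<tau> (W j) = W ((k0 + j) mod m) \<and> (\<forall>i<n. \<tau> (U j i) = U ((k0 + j) mod m) i))"
    if t: "\<tau> \<in> graph_aut VH EH cH" for \<tau>
  proof -
    have tb: "bij_betw \<tau> VH VH" and tE: "\<And>x y. x \<in> VH \<Longrightarrow> y \<in> VH \<Longrightarrow> EH (\<tau> x) (\<tau> y) \<longleftrightarrow> EH x y"
      and tc: "\<And>x. x \<in> VH \<Longrightarrow> cH (\<tau> x) = cH x"
      using t unfolding graph_aut_def by auto
    have tV: "\<tau> z \<in> VH" if "z \<in> VH" for z using tb that bij_betwE by blast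
    have tL: "\<exists>y\<in>V. \<tau> (Inl x) = Inl y" if x: "x \<in> V" for x
    proof -
      have z: "\<tau> (Inl x) \<in> VH" using tV VH_I(1)[OF x] .
      have col: "cH (\<tau> (Inl x)) = Inl (c x)" using tc VH_I(1)[OF x] by simp
      from VH_cases[OF z] show ?thesis
      proof (elim disjE exE bexE conjE)
        fix y assume "y \<in> V" "\<tau> (Inl x) = Inl y" then show ?thesis by blast
      next
        fix j assume "j < m" "\<tau> (Inl x) = W j" then show ?thesis using col by simp
      next
        fix j i assume "j < m" "i < n" "\<tau> (Inl x) = U j i" then show ?thesis using col by simp
      qed
    qed
    have tW: "\<exists>k<m. \<tau> (W j) = W k" if j: "j < m" for j
    proof -
      have z: "\<tau> (W j) \<in> VH" using tV VH_I(2)[OF j] .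
      have col: "cH (\<tau> (W j)) = Inr 0" using tc VH_I(2)[OF j] by simp
      from VH_cases[OF z] show ?thesis
      proof (elim disjE exE bexE conjE)
        fix y assume "y \<in> V" "\<tau> (W j) = Inl y" then show ?thesis using col by simp
      next
        fix k assume "k < m" "\<tau> (W j) = W k" then show ?thesis by blast
      next
        fix k i assume "k < m" "i < n" "\<tau> (W j) = U k i" then show ?thesis using col by simp
      qed
    qed
    have tU: "\<tau> (U j i) = U k i" if ji: "j < m" "i < n" "\<tau> (W j) = W k" "k < m" for j i k
    proof -
      have z: "\<tau> (U j i) \<in> VH" using tV VH_I(3)[OF ji(1,2)] .
      have col: "cH (\<tau> (U j i)) = Inr (Suc i)" using tc VH_I(3)[OF ji(1,2)] by simp
      have e: "EH (W k) (\<tau> (U j i))" using tE[OF VH_I(2)[OF ji(1)] VH_I(3)[OF ji(1,2)]] EH_WU ji by simp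
      from VH_cases[OF z] show ?thesis
      proof (elim disjE exE bexE conjE)
        fix y assume "y \<in> V" "\<tau> (U j i) = Inl y" then show ?thesis using col by simp
      next
        fix k' assume "k' < m" "\<tau> (U j i) = W k'" then show ?thesis using col by simp
      next
        fix k' i' assume "k' < m" "i' < n" "\<tau> (U j i) = U k' i'"
        then show ?thesis using col e EH_WU by simp
      qed
    qed
    have tLU: "\<tau> (Inl ((\<sigma> ^^ j) (e i))) = Inl ((\<sigma> ^^ k) (e i))"
      if ji: "j < m" "i < n" "\<tau> (W j) = W k" "k < m" for j i k
    proof -
      have xV: "(\<sigma> ^^ j) (e i) \<in> V" using pV eV ji(2) by blast
      obtain y where y: "y \<in> V" "\<tau> (Inl ((\<sigma> ^^ j) (e i))) = Inl y" using tL[OF xV] by blast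
      have "EH (U j i) (Inl ((\<sigma> ^^ j) (e i)))" using EH_UL ji by simp
      then have "EH (\<tau> (U j i)) (\<tau> (Inl ((\<sigma> ^^ j) (e i))))"
        using tE[OF VH_I(3)[OF ji(1,2)] VH_I(1)[OF xV]] by simp
      then have "EH (U k i) (Inl y)" using tU[OF ji] y by simp
      then show ?thesis using EH_UL y by simp
    qed
    obtain k0 where k0: "k0 < m" "\<tau> (W 0) = W k0" using tW m0 by blast
    have f0: "\<forall>x\<in>V. \<tau> (Inl x) = Inl ((\<sigma> ^^ k0) x)"
    proof
      fix x assume "x \<in> V"
      then obtain i where i: "i < n" "e i = x" using eS by blast
      show "\<tau> (Inl x) = Inl ((\<sigma> ^^ k0) x)" using tLU[OF m0 i(1) k0(2) k0(1)] i by simp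
    qed
    have fj: "\<tau> (W j) = W ((k0 + j) mod m) \<and> (\<forall>i<n. \<tau> (U j i) = U ((k0 + j) mod m) i)" if j: "j < m" for j
    proof -
      obtain k where k: "k < m" "\<tau> (W j) = W k" using tW j by blast
      have "\<forall>x\<in>V. (\<sigma> ^^ k) x = (\<sigma> ^^ ((k0 + j) mod m)) x"
      proof
        fix x assume "x \<in> V"
        then obtain i where i: "i < n" "e i = x" using eS by blast
        have "Inl ((\<sigma> ^^ k) x) = \<tau> (Inl ((\<sigma> ^^ j) x))" using tLU[OF j i(1) k(2) k(1)] i by simp
        also have "\<dots> = Inl ((\<sigma> ^^ k0) ((\<sigma> ^^ j) x))" using f0 pV \<open>x \<in> V\<close> by blast
        also have "(\<sigma> ^^ k0) ((\<sigma> ^^ j) x) = (\<sigma> ^^ (k0 + j)) x" by (simp add: funpow_add)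
        also have "\<dots> = (\<sigma> ^^ ((k0 + j) mod m)) x" using pmod[OF \<open>x \<in> V\<close>, of "k0 + j"] .
        finally show "(\<sigma> ^^ k) x = (\<sigma> ^^ ((k0 + j) mod m)) x" by simp
      qed
      then have "k = (k0 + j) mod m" using mdist k(1) m0 by simp
      then show ?thesis using k tU j by blast
    qed
    show ?thesis using k0(1) f0 fj by blast
  qed
  have faith: "\<forall>x\<in>VH. \<tau> x = x" if t: "\<tau> \<in> graph_aut VH EH cH" and fx: "\<forall>v\<in>V. \<tau> (Inl v) = Inl v" for \<tau>
  proof -
    obtain k0 where k0: "k0 < m" "\<forall>x\<in>V. \<tau> (Inl x) = Inl ((\<sigma> ^^ k0) x)"
      "\<forall>j<m. \<tau> (W j) = W ((k0 + j) mod m) \<and> (\<forall>i<n. \<tau> (U j i) = U ((k0 + j) mod m) i)"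
      using tau[OF t] by blast
    have "\<forall>x\<in>V. (\<sigma> ^^ k0) x = (\<sigma> ^^ 0) x" using k0(2) fx by simp
    then have k00: "k0 = 0" using mdist k0(1) m0 by blast
    show ?thesis
    proof
      fix x assume "x \<in> VH"
      then consider (L) y where "y \<in> V" "x = Inl y" | (W) a where "a < m" "x = W a"
        | (U) a i where "a < m" "i < n" "x = U a i"
        using VH_cases by blast
      then show "\<tau> x = x"
      proof cases
        case L then show ?thesis using fx by simp
      next
        case W then show ?thesis using k0(3) k00 by simp
      next
        case U then show ?thesis using k0(3) k00 by simp
      qed
    qed
  qed
  have inv: "\<tau> ` (Inl ` V) = Inl ` V" if t: "\<tau> \<in> graph_aut VH EH cH" for \<tau>
  proof -
    obtain k0 where k0: "k0 < m" "\<forall>x\<in>V. \<tau> (Inl x) = Inl ((\<sigma> ^^ k0) x)"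
      using tau[OF t] by blast
    have sub: "\<tau> ` (Inl ` V) \<subseteq> Inl ` V" using k0(2) pV by auto
    have "inj_on \<tau> VH" using t unfolding graph_aut_def bij_betw_def by blast
    then have "inj_on \<tau> (Inl ` V)" by (rule inj_on_subset) (use VH_I in auto)
    then show ?thesis using endo_inj_surj[OF _ sub] finV by blast
  qed
  have semiH: "\<forall>x\<in>VH. \<tau> x = x" if t: "\<tau> \<in> graph_aut VH EH cH" and l: "l \<in> L" and fl: "\<tau> (Inl l) = Inl l" for \<tau> l
  proof -
    obtain k0 where k0: "k0 < m" "\<forall>x\<in>V. \<tau> (Inl x) = Inl ((\<sigma> ^^ k0) x)"
      using tau[OF t] by blast
    have "(\<sigma> ^^ k0) l = l" using k0(2) fl l LV by auto
    then have "\<forall>x\<in>V. (\<sigma> ^^ k0) x = x" using semi l by blast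
    then have "\<forall>v\<in>V. \<tau> (Inl v) = Inl v" using k0(2) by simp
    then show ?thesis using faith t by blast
  qed
  have orbH: "orbit_of (graph_aut VH EH cH) (Inl v) = Inl ` Orb v" if v: "v \<in> V" for v
  proof
    show "orbit_of (graph_aut VH EH cH) (Inl v) \<subseteq> Inl ` Orb v"
    proof
      fix z assume "z \<in> orbit_of (graph_aut VH EH cH) (Inl v)"
      then obtain \<tau> where t: "\<tau> \<in> graph_aut VH EH cH" "z = \<tau> (Inl v)" unfolding orbit_of_def by blast
      obtain k0 where k0: "k0 < m" "\<forall>x\<in>V. \<tau> (Inl x) = Inl ((\<sigma> ^^ k0) x)"
        using tau[OF t(1)] by blast
      have "(\<sigma> ^^ k0) v \<in> Orb v" using orb v k0(1) by blast
      then show "z \<in> Inl ` Orb v" using t(2) k0(2) v by simp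
    qed
    show "Inl ` Orb v \<subseteq> orbit_of (graph_aut VH EH cH) (Inl v)"
    proof
      fix z :: "'a + nat" assume "z \<in> Inl ` Orb v"
      then obtain j where j: "j < m" "z = Inl ((\<sigma> ^^ j) v)" using orb v by blast
      have "Phi j (Inl v) = z" using j Phi_simps by simp
      moreover have "Phi j \<in> graph_aut VH EH cH" using Phi_aut[of j] j by simp
      ultimately show "z \<in> orbit_of (graph_aut VH EH cH) (Inl v)"
        unfolding orbit_of_def by (metis image_eqI)
    qed
  qed
  show ?thesis
  proof (intro exI[of _ VH] exI[of _ EH] exI[of _ cH] conjI)
    show "finite VH" by (rule finVH)
    show "simple_graph VH EH" by (rule sgH)
    show "Inl ` V \<subseteq> VH" using VH_I by blast
    show "\<forall>x\<in>V. \<forall>y\<in>V. EH (Inl x) (Inl y) \<longleftrightarrow> E x y" using EH_LL by blast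
    show "\<forall>x\<in>V. cH (Inl x) = Inl (c x)" by simp
    show "\<forall>\<tau>\<in>graph_aut VH EH cH. \<tau> ` (Inl ` V) = Inl ` V" using inv by blast
    show "\<forall>\<tau>\<in>graph_aut VH EH cH. (\<forall>v\<in>V. \<tau> (Inl v) = Inl v) \<longrightarrow> (\<forall>x\<in>VH. \<tau> x = x)"
      using faith by blast
    show "\<forall>\<tau>\<in>graph_aut VH EH cH. \<forall>l\<in>L. \<tau> (Inl l) = Inl l \<longrightarrow> (\<forall>x\<in>VH. \<tau> x = x)"
      using semiH by blast
    show "\<forall>v\<in>V. orbit_of (graph_aut VH EH cH) (Inl v) = Inl ` Orb v" using orbH by blast
  qed
qed

theorem theorem2:
  fixes V :: "'a set" and E :: "'a \<Rightarrow> 'a \<Rightarrow> bool" and r :: 'a and c :: "'a \<Rightarrow> 'c"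
  assumes tree: "finite_rooted_tree V E r"
    and equal_leaf_orbits: "\<forall>l1\<in>tree_leaves V E r. \<forall>l2\<in>tree_leaves V E r.
           card (orbit_of (rtree_aut V E c r) l1) = card (orbit_of (rtree_aut V E c r) l2)"
  shows "\<exists>(VH :: ('a + nat) set) (EH :: 'a + nat \<Rightarrow> 'a + nat \<Rightarrow> bool) (cH :: 'a + nat \<Rightarrow> 'c + nat).
     finite VH \<and> simple_graph VH EH \<and>
     \<comment> \<open>T (with its colouring) is an induced subgraph of H_T, via Inl\<close>
     Inl ` V \<subseteq> VH \<and>
     (\<forall>x\<in>V. \<forall>y\<in>V. EH (Inl x) (Inl y) \<longleftrightarrow> E x y) \<and>
     (\<forall>x\<in>V. cH (Inl x) = Inl (c x)) \<and>
     \<comment> \<open>V(T) is invariant under Aut(H_T)\<close>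
     (\<forall>\<sigma>\<in>graph_aut VH EH cH. \<sigma> ` (Inl ` V) = Inl ` V) \<and>
     \<comment> \<open>faithful action on V(T)\<close>
     (\<forall>\<sigma>\<in>graph_aut VH EH cH. (\<forall>v\<in>V. \<sigma> (Inl v) = Inl v) \<longrightarrow> (\<forall>x\<in>VH. \<sigma> x = x)) \<and>
     \<comment> \<open>semiregular action on the leaves of T\<close>
     (\<forall>\<sigma>\<in>graph_aut VH EH cH. \<forall>l\<in>tree_leaves V E r.
        \<sigma> (Inl l) = Inl l \<longrightarrow> (\<forall>x\<in>VH. \<sigma> x = x)) \<and>
     \<comment> \<open>orbits on V(T) coincide with Aut(T)-orbits\<close>
     (\<forall>v\<in>V. orbit_of (graph_aut VH EH cH) (Inl v) = Inl ` orbit_of (rtree_aut V E c r) v)"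
proof -
  interpret T: rtc V E r c by unfold_locales (rule tree)
  obtain \<sigma> m where sm: "T.aut \<sigma>" "0 < m" "\<forall>x\<in>V. (\<sigma> ^^ m) x = x"
    "\<forall>a<m. \<forall>b<m. (\<forall>x\<in>V. (\<sigma> ^^ a) x = (\<sigma> ^^ b) x) \<longrightarrow> a = b"
    "\<forall>x\<in>V. orbit_of (rtree_aut V E c r) x = {(\<sigma> ^^ j) x | j. j < m}"
    "\<forall>l\<in>tree_leaves V E r. \<forall>a. (\<sigma> ^^ a) l = l \<longrightarrow> (\<forall>x\<in>V. (\<sigma> ^^ a) x = x)"
    using T.final_sigma[OF equal_leaf_orbits] by blast
  have saut: "\<sigma> \<in> graph_aut V E c" using sm(1) unfolding T.aut_def rtree_aut_def by simp
  have LV: "tree_leaves V E r \<subseteq> V" unfolding tree_leaves_def by blast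
  show ?thesis
    by (rule H_construct[OF T.finV T.sg sm(2) sm(3) sm(4) saut sm(5) LV sm(6)])
qed

end
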